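(* Let $\mathscr C$ be a small permutative category and let $X^{(1)},\dots,X^{(m)}\in\Phi(\mathscr C)$. Then: (1) there exists an $X^\bullet$-monotone injection $\phi\colon\mathbf m\times\omega\to\omega$; (2) if $\phi,\phi'\colon\mathbf m\times\omega\to\omega$ are two $X^\bullet$-monotone injections, then $\bigotimes_{i\in\omega}(\phi_*(X^\bullet))_i=\bigotimes_{i\in\omega}(\phi'_*(X^\bullet))_i$ in $\mathscr C$, and the morphism $[\phi',\phi]_{X^\bullet}\colon\phi_*(X^\bullet)\to\phi'_*(X^\bullet)$ in $\Phi(\mathscr C)$ is given by the identity morphism of this object of $\mathscr C$.
   Context: A permutative category is a symmetric monoidal category $(\mathscr C,\otimes,\mathbf 1,\tau)$ whose associativity and unit isomorphisms are identities; for $\sigma\in\Sigma_K$, the coherence isomorphism $\bigotimes_{i=1}^KA_i\to\bigotimes_{i=1}^KA_{\sigma^{-1}(i)}$ is the composite of maps $\mathrm{id}\otimes\tau\otimes\mathrm{id}$ along a decomposition of $\sigma$ into adjacent transpositions. Let $\omega=\{1,2,\dots\}$, $\mathbf m=\{1,\dots,m\}$, $\mathcal M$ the monoid of injections $\omega\to\omega$. $\Phi(\mathscr C)$ is the parsummable category whose objects are sequences $X=(X_1,X_2,\dots)$ of objects of $\mathscr C$ with $X_i=\mathbf 1$ for almost all $i$; $\mathrm{Hom}(X,Y)=\mathrm{Hom}_{\mathscr C}(\bigotimes_{i\in\omega}X_i,\bigotimes_{i\in\omega}Y_i)$ (ordered tensor product of non-unit entries; a morphism is a morphism of $\mathscr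 C$ together with its source and target); $(u_*X)_i=X_j$ if $i=u(j)$ and $\mathbf 1$ if $i\notin\mathrm{im}(u)$; the structure isomorphism $[u,1]_X\colon X\to u_*X$ is the coherence isomorphism associated to any $\sigma\in\Sigma_K$ with $\sigma(i)=u(i)$ for all $i\le K$ with $X_i\ne\mathbf1$, where $X_i=\mathbf 1=(u_*X)_i$ for $i>K$, and $[v,u]_X=[v,1]_X\circ[u,1]_X^{-1}$; $\mathrm{supp}(X)=\{i:X_i\ne\mathbf 1\}$; the sum of disjointly supported $X,Y$ has entries $X_i$ for $i\in\mathrm{supp}(X)$ and $Y_i$ otherwise, and sums of morphisms are $f\otimes g$ conjugated by the coherence isomorphisms rearranging entries. For a finite set $A$, injections $\phi,\phi'\colon A\times\omega\to\omega$ and a family $(X^{(a)})_{a\in A}$ of objects, $\phi_*(X^\bullet)=\sum_a\phi(a,-)_*(X^{(a)})$ and $[\phi',\phi]_{X^\bullet}=\sum_a[\phi'(a,-),\phi(a,-)]_{X^{(a)}}$. An injection $\phi\colon\mathbf m\times\omega\to\omega$ is $X^\bullet$-monotone if $\phi(i,j)<\phi(i',j')$ for all $i,i'\in\mathbf m$, $j,j'\in\omega$ with $(i,j)$ lexicographically smaller than $(i',j')$ and $X^{(i)}_j\ne\mathbf 1\ne X^{(i')}_{j'}$. *)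

theory Defs
  imports Main
begin

record ('o, 'm) pcat =
  ob   :: "'o set"
  mor  :: "'m set"
  dm   :: "'m \<Rightarrow> 'o"
  cd   :: "'m \<Rightarrow> 'o"
  cmp  :: "'m \<Rightarrow> 'm \<Rightarrow> 'm"   (* cmp g f = g \<circ> f *)
  idm  :: "'o \<Rightarrow> 'm"
  tn   :: "'o \<Rightarrow> 'o \<Rightarrow> 'o"
  tnm  :: "'m \<Rightarrow> 'm \<Rightarrow> 'm"
  un   :: "'o"
  sy   :: "'o \<Rightarrow> 'o \<Rightarrow> 'm"   (* symmetry tau_{A,B} : A (x) B \<rightarrow> B (x) A *)

definition permutative_cat :: "('o, 'm) pcat \<Rightarrow> bool" where
  "permutative_cat C \<longleftrightarrow>
     \<comment> \<open>category\<close>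
     (\<forall>f\<in>mor C. dm C f \<in> ob C \<and> cd C f \<in> ob C) \<and>
     (\<forall>A\<in>ob C. idm C A \<in> mor C \<and> dm C (idm C A) = A \<and> cd C (idm C A) = A) \<and>
     (\<forall>f\<in>mor C. \<forall>g\<in>mor C. dm C g = cd C f \<longrightarrow>
        cmp C g f \<in> mor C \<and> dm C (cmp C g f) = dm C f \<and> cd C (cmp C g f) = cd C g) \<and>
     (\<forall>f\<in>mor C. cmp C (idm C (cd C f)) f = f \<and> cmp C f (idm C (dm C f)) = f) \<and>
     (\<forall>f\<in>mor C. \<forall>g\<in>mor C. \<forall>h\<in>mor C. dm C g = cd C f \<longrightarrow> dm C h = cd C g \<longrightarrow>
        cmp C h (cmp C g f) = cmp C (cmp C h g) f) \<and>
     \<comment> \<open>tensor is a bifunctor\<close>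
     (\<forall>A\<in>ob C. \<forall>B\<in>ob C. tn C A B \<in> ob C) \<and>
     (\<forall>f\<in>mor C. \<forall>g\<in>mor C. tnm C f g \<in> mor C \<and>
        dm C (tnm C f g) = tn C (dm C f) (dm C g) \<and> cd C (tnm C f g) = tn C (cd C f) (cd C g)) \<and>
     (\<forall>A\<in>ob C. \<forall>B\<in>ob C. tnm C (idm C A) (idm C B) = idm C (tn C A B)) \<and>
     (\<forall>f\<in>mor C. \<forall>g\<in>mor C. \<forall>f'\<in>mor C. \<forall>g'\<in>mor C.
        dm C g = cd C f \<longrightarrow> dm C g' = cd C f' \<longrightarrow>
        tnm C (cmp C g f) (cmp C g' f') = cmp C (tnm C g g') (tnm C f f')) \<and>
     \<comment> \<open>strict associativity and unit\<close>
     un C \<in> ob C \<and>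
     (\<forall>A\<in>ob C. tn C (un C) A = A \<and> tn C A (un C) = A) \<and>
     (\<forall>A\<in>ob C. \<forall>B\<in>ob C. \<forall>D\<in>ob C. tn C (tn C A B) D = tn C A (tn C B D)) \<and>
     (\<forall>f\<in>mor C. tnm C (idm C (un C)) f = f \<and> tnm C f (idm C (un C)) = f) \<and>
     (\<forall>f\<in>mor C. \<forall>g\<in>mor C. \<forall>h\<in>mor C. tnm C (tnm C f g) h = tnm C f (tnm C g h)) \<and>
     \<comment> \<open>symmetry\<close>
     (\<forall>A\<in>ob C. \<forall>B\<in>ob C. sy C A B \<in> mor C \<and> dm C (sy C A B) = tn C A B \<and> cd C (sy C A B) = tn C B A) \<and>
     (\<forall>f\<in>mor C. \<forall>g\<in>mor C.
        cmp C (sy C (cd C f) (cd C g)) (tnm C f g) = cmp C (tnm C g f) (sy C (dm C f) (dm C g))) \<and>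
     (\<forall>A\<in>ob C. \<forall>B\<in>ob C. cmp C (sy C B A) (sy C A B) = idm C (tn C A B)) \<and>
     (\<forall>A\<in>ob C. sy C A (un C) = idm C A) \<and>
     (\<forall>A\<in>ob C. \<forall>B\<in>ob C. \<forall>D\<in>ob C.
        sy C A (tn C B D) = cmp C (tnm C (idm C B) (sy C A D)) (tnm C (sy C A B) (idm C D)))"

section \<open>Coherence isomorphisms (positions are 0-based: 0, ..., K-1)\<close>

definition tens_list :: "('o, 'm) pcat \<Rightarrow> 'o list \<Rightarrow> 'o" where
  "tens_list C L = foldr (tn C) L (un C)"

definition adjswap :: "nat \<Rightarrow> nat \<Rightarrow> nat" where
  "adjswap j i = (if i = j then Suc j else if i = Suc j then j else i)"

definition swap_list :: "'o list \<Rightarrow> nat \<Rightarrow> 'o list" where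
  "swap_list L j = L[j := L ! Suc j, Suc j := L ! j]"

definition step_mor :: "('o, 'm) pcat \<Rightarrow> 'o list \<Rightarrow> nat \<Rightarrow> 'm" where
  "step_mor C L j = tnm C (tnm C (idm C (tens_list C (take j L))) (sy C (L ! j) (L ! Suc j)))
                          (idm C (tens_list C (drop (Suc (Suc j)) L)))"

fun steps_mor :: "('o, 'm) pcat \<Rightarrow> 'o list \<Rightarrow> nat list \<Rightarrow> 'm" where
  "steps_mor C L [] = idm C (tens_list C L)"
| "steps_mor C L (j # js) = cmp C (steps_mor C (swap_list L j) js) (step_mor C L j)"

text \<open>After the steps js, the entry at position i is the original entry at position perm_of js i.\<close>
fun perm_of :: "nat list \<Rightarrow> nat \<Rightarrow> nat" where
  "perm_of [] = id"
| "perm_of (j # js) = adjswap j \<circ> perm_of js"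

text \<open>Coherence isomorphism A_0 (x) ... (x) A_{K-1} \<rightarrow> A_{sigma^-1 0} (x) ... (x) A_{sigma^-1 (K-1)}
  associated to a permutation sigma of {0..<K}, as the composite along a decomposition of sigma
  into adjacent transpositions (independence of the decomposition is the coherence theorem).\<close>
definition coh :: "('o, 'm) pcat \<Rightarrow> 'o list \<Rightarrow> (nat \<Rightarrow> nat) \<Rightarrow> 'm" where
  "coh C L \<sigma> = (SOME f. \<exists>js. (\<forall>j\<in>set js. Suc j < length L) \<and>
        (\<forall>i<length L. \<sigma> (perm_of js i) = i) \<and> f = steps_mor C L js)"

definition inv_mor :: "('o, 'm) pcat \<Rightarrow> 'm \<Rightarrow> 'm" where
  "inv_mor C f = (SOME g. g \<in> mor C \<and> dm C g = cd C f \<and> cd C g = dm C f \<and>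
        cmp C g f = idm C (dm C f) \<and> cmp C f g = idm C (cd C f))"

section \<open>The parsummable category Phi(C) (omega is rendered as nat, 0-based)\<close>

definition supp :: "('o, 'm) pcat \<Rightarrow> (nat \<Rightarrow> 'o) \<Rightarrow> nat set" where
  "supp C X = {i. X i \<noteq> un C}"

definition Phi_obj :: "('o, 'm) pcat \<Rightarrow> (nat \<Rightarrow> 'o) \<Rightarrow> bool" where
  "Phi_obj C X \<longleftrightarrow> (\<forall>i. X i \<in> ob C) \<and> finite (supp C X)"

definition bigtens :: "('o, 'm) pcat \<Rightarrow> (nat \<Rightarrow> 'o) \<Rightarrow> 'o" where
  "bigtens C X = tens_list C (map X (sorted_list_of_set (supp C X)))"

definition push :: "('o, 'm) pcat \<Rightarrow> (nat \<Rightarrow> nat) \<Rightarrow> (nat \<Rightarrow> 'o) \<Rightarrow> nat \<Rightarrow> 'o" where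
  "push C u X i = (if i \<in> range u then X (inv u i) else un C)"

definition struct_iso :: "('o, 'm) pcat \<Rightarrow> (nat \<Rightarrow> nat) \<Rightarrow> (nat \<Rightarrow> 'o) \<Rightarrow> 'm" where
  "struct_iso C u X = (SOME f. \<exists>K \<sigma>. bij_betw \<sigma> {..<K} {..<K} \<and>
        (\<forall>i<K. X i \<noteq> un C \<longrightarrow> \<sigma> i = u i) \<and>
        (\<forall>i\<ge>K. X i = un C \<and> push C u X i = un C) \<and>
        f = coh C (map X [0..<K]) \<sigma>)"

definition gen_iso :: "('o, 'm) pcat \<Rightarrow> (nat \<Rightarrow> nat) \<Rightarrow> (nat \<Rightarrow> nat) \<Rightarrow> (nat \<Rightarrow> 'o) \<Rightarrow> 'm" where
  "gen_iso C v u X = cmp C (struct_iso C v X) (inv_mor C (struct_iso C u X))"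

definition osum :: "('o, 'm) pcat \<Rightarrow> (nat \<Rightarrow> 'o) \<Rightarrow> (nat \<Rightarrow> 'o) \<Rightarrow> nat \<Rightarrow> 'o" where
  "osum C X Y i = (if i \<in> supp C X then X i else Y i)"

text \<open>Coherence isomorphism rearranging the entries of X+Y into (entries of X)(entries of Y).\<close>
definition rearr :: "('o, 'm) pcat \<Rightarrow> (nat \<Rightarrow> 'o) \<Rightarrow> (nat \<Rightarrow> 'o) \<Rightarrow> 'm" where
  "rearr C X Y =
     (let S = sorted_list_of_set (supp C X \<union> supp C Y);
          \<sigma> = (\<lambda>p. if S ! p \<in> supp C X then card {k\<in>supp C X. k < S ! p}
                    else card (supp C X) + card {k\<in>supp C Y. k < S ! p})
      in coh C (map (osum C X Y) S) \<sigma>)"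

definition msum :: "('o, 'm) pcat \<Rightarrow> (nat \<Rightarrow> 'o) \<Rightarrow> (nat \<Rightarrow> 'o) \<Rightarrow> (nat \<Rightarrow> 'o) \<Rightarrow> (nat \<Rightarrow> 'o)
                      \<Rightarrow> 'm \<Rightarrow> 'm \<Rightarrow> 'm" where
  "msum C X Y X' Y' f g = cmp C (inv_mor C (rearr C X' Y')) (cmp C (tnm C f g) (rearr C X Y))"

definition osum_list :: "('o, 'm) pcat \<Rightarrow> (nat \<Rightarrow> 'o) list \<Rightarrow> nat \<Rightarrow> 'o" where
  "osum_list C Xs = foldr (osum C) Xs (\<lambda>_. un C)"

fun msum_list :: "('o, 'm) pcat \<Rightarrow> ((nat \<Rightarrow> 'o) \<times> (nat \<Rightarrow> 'o) \<times> 'm) list \<Rightarrow> 'm" where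
  "msum_list C [] = idm C (un C)"
| "msum_list C ((X, X', f) # rest) =
     msum C X (osum_list C (map fst rest)) X' (osum_list C (map (fst \<circ> snd) rest)) f (msum_list C rest)"

text \<open>phi_*(X^\<bullet>) for phi : m \<times> omega \<rightarrow> omega (curried, m = {0..<m}).\<close>
definition push_fam :: "('o, 'm) pcat \<Rightarrow> nat \<Rightarrow> (nat \<Rightarrow> nat \<Rightarrow> nat) \<Rightarrow> (nat \<Rightarrow> nat \<Rightarrow> 'o) \<Rightarrow> nat \<Rightarrow> 'o" where
  "push_fam C m \<phi> Xs = osum_list C (map (\<lambda>a. push C (\<phi> a) (Xs a)) [0..<m])"

definition gen_iso_fam :: "('o, 'm) pcat \<Rightarrow> nat \<Rightarrow> (nat \<Rightarrow> nat \<Rightarrow> nat) \<Rightarrow> (nat \<Rightarrow> nat \<Rightarrow> nat)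
                            \<Rightarrow> (nat \<Rightarrow> nat \<Rightarrow> 'o) \<Rightarrow> 'm" where
  "gen_iso_fam C m \<phi>' \<phi> Xs =
     msum_list C (map (\<lambda>a. (push C (\<phi> a) (Xs a), push C (\<phi>' a) (Xs a), gen_iso C (\<phi>' a) (\<phi> a) (Xs a)))
                      [0..<m])"

definition inj_fam :: "nat \<Rightarrow> (nat \<Rightarrow> nat \<Rightarrow> nat) \<Rightarrow> bool" where
  "inj_fam m \<phi> \<longleftrightarrow> inj_on (\<lambda>(a, j). \<phi> a j) ({..<m} \<times> UNIV)"

definition X_monotone :: "('o, 'm) pcat \<Rightarrow> nat \<Rightarrow> (nat \<Rightarrow> nat \<Rightarrow> 'o) \<Rightarrow> (nat \<Rightarrow> nat \<Rightarrow> nat) \<Rightarrow> bool" where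
  "X_monotone C m Xs \<phi> \<longleftrightarrow>
     (\<forall>i<m. \<forall>i'<m. \<forall>j j'. (i < i' \<or> (i = i' \<and> j < j')) \<and> Xs i j \<noteq> un C \<and> Xs i' j' \<noteq> un C
        \<longrightarrow> \<phi> i j < \<phi> i' j')"

end

theory Submission
  imports Defs
begin


locale pc = fixes C :: "('o,'m) pcat" assumes pcat: "permutative_cat C"
begin

lemmas ax = pcat[unfolded permutative_cat_def]

lemma dm_ob: "f \<in> mor C \<Longrightarrow> dm C f \<in> ob C" and cd_ob: "f \<in> mor C \<Longrightarrow> cd C f \<in> ob C"
  using ax by auto

lemma idm_mor[simp]: "A \<in> ob C \<Longrightarrow> idm C A \<in> mor C"
  and dm_idm[simp]: "A \<in> ob C \<Longrightarrow> dm C (idm C A) = A"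
  and cd_idm[simp]: "A \<in> ob C \<Longrightarrow> cd C (idm C A) = A"
  using ax by auto

lemma cmp_mor[simp]: "f \<in> mor C \<Longrightarrow> g \<in> mor C \<Longrightarrow> dm C g = cd C f \<Longrightarrow> cmp C g f \<in> mor C"
  and dm_cmp[simp]: "f \<in> mor C \<Longrightarrow> g \<in> mor C \<Longrightarrow> dm C g = cd C f \<Longrightarrow> dm C (cmp C g f) = dm C f"
  and cd_cmp[simp]: "f \<in> mor C \<Longrightarrow> g \<in> mor C \<Longrightarrow> dm C g = cd C f \<Longrightarrow> cd C (cmp C g f) = cd C g"
  using ax by auto

lemma id_l: "f \<in> mor C \<Longrightarrow> cmp C (idm C (cd C f)) f = f"
  and id_r: "f \<in> mor C \<Longrightarrow> cmp C f (idm C (dm C f)) = f"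
  using ax by auto

lemma id_l'[simp]: "f \<in> mor C \<Longrightarrow> cd C f = A \<Longrightarrow> cmp C (idm C A) f = f"
  and id_r'[simp]: "f \<in> mor C \<Longrightarrow> dm C f = A \<Longrightarrow> cmp C f (idm C A) = f"
  using id_l id_r by blast+

lemma cassoc: "f \<in> mor C \<Longrightarrow> g \<in> mor C \<Longrightarrow> h \<in> mor C \<Longrightarrow> dm C g = cd C f \<Longrightarrow> dm C h = cd C g \<Longrightarrow>
        cmp C h (cmp C g f) = cmp C (cmp C h g) f"
  using ax by auto

lemma tn_ob[simp]: "A \<in> ob C \<Longrightarrow> B \<in> ob C \<Longrightarrow> tn C A B \<in> ob C"
  using ax by auto

lemma tnm_mor[simp]: "f \<in> mor C \<Longrightarrow> g \<in> mor C \<Longrightarrow> tnm C f g \<in> mor C"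
  and dm_tnm[simp]: "f \<in> mor C \<Longrightarrow> g \<in> mor C \<Longrightarrow> dm C (tnm C f g) = tn C (dm C f) (dm C g)"
  and cd_tnm[simp]: "f \<in> mor C \<Longrightarrow> g \<in> mor C \<Longrightarrow> cd C (tnm C f g) = tn C (cd C f) (cd C g)"
  using ax by auto

lemma tnm_id[simp]: "A \<in> ob C \<Longrightarrow> B \<in> ob C \<Longrightarrow> tnm C (idm C A) (idm C B) = idm C (tn C A B)"
  using ax by auto

lemma interchange: "f \<in> mor C \<Longrightarrow> g \<in> mor C \<Longrightarrow> f' \<in> mor C \<Longrightarrow> g' \<in> mor C \<Longrightarrow>
        dm C g = cd C f \<Longrightarrow> dm C g' = cd C f' \<Longrightarrow>
        tnm C (cmp C g f) (cmp C g' f') = cmp C (tnm C g g') (tnm C f f')"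
  using ax by auto

lemma un_ob[simp]: "un C \<in> ob C"
  using ax by auto

lemma tn_un[simp]: "A \<in> ob C \<Longrightarrow> tn C (un C) A = A" "A \<in> ob C \<Longrightarrow> tn C A (un C) = A"
  using ax by auto

lemma tn_assoc[simp]: "A \<in> ob C \<Longrightarrow> B \<in> ob C \<Longrightarrow> D \<in> ob C \<Longrightarrow> tn C (tn C A B) D = tn C A (tn C B D)"
  using ax by auto

lemma tnm_assoc[simp]: "f \<in> mor C \<Longrightarrow> g \<in> mor C \<Longrightarrow> h \<in> mor C \<Longrightarrow> tnm C (tnm C f g) h = tnm C f (tnm C g h)"
  using ax by auto

lemma sy_mor[simp]: "A \<in> ob C \<Longrightarrow> B \<in> ob C \<Longrightarrow> sy C A B \<in> mor C"
  and dm_sy[simp]: "A \<in> ob C \<Longrightarrow> B \<in> ob C \<Longrightarrow> dm C (sy C A B) = tn C A B"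
  and cd_sy[simp]: "A \<in> ob C \<Longrightarrow> B \<in> ob C \<Longrightarrow> cd C (sy C A B) = tn C B A"
  using ax by auto

lemma sy_nat: "f \<in> mor C \<Longrightarrow> g \<in> mor C \<Longrightarrow>
        cmp C (sy C (cd C f) (cd C g)) (tnm C f g) = cmp C (tnm C g f) (sy C (dm C f) (dm C g))"
  using ax by auto

lemma sy_inv: "A \<in> ob C \<Longrightarrow> B \<in> ob C \<Longrightarrow> cmp C (sy C B A) (sy C A B) = idm C (tn C A B)"
  using ax by auto

lemma sy_un[simp]: "A \<in> ob C \<Longrightarrow> sy C A (un C) = idm C A"
  using ax by auto

lemma hex: "A \<in> ob C \<Longrightarrow> B \<in> ob C \<Longrightarrow> D \<in> ob C \<Longrightarrow>
        sy C A (tn C B D) = cmp C (tnm C (idm C B) (sy C A D)) (tnm C (sy C A B) (idm C D))"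
  using ax by auto

lemma un_sy[simp]: "A \<in> ob C \<Longrightarrow> sy C (un C) A = idm C A"
proof -
  assume A: "A \<in> ob C"
  have "cmp C (sy C (un C) A) (sy C A (un C)) = idm C A" using sy_inv[OF A un_ob] A by simp
  then show ?thesis using A by simp
qed

lemma tnm_idun[simp]: "f \<in> mor C \<Longrightarrow> tnm C (idm C (un C)) f = f" "f \<in> mor C \<Longrightarrow> tnm C f (idm C (un C)) = f"
  using ax by auto

lemma tens_Nil[simp]: "tens_list C [] = un C" and tens_Cons[simp]: "tens_list C (x # xs) = tn C x (tens_list C xs)"
  by (simp_all add: tens_list_def)

lemma tens_ob[simp]: "set L \<subseteq> ob C \<Longrightarrow> tens_list C L \<in> ob C"
  by (induction L) auto

lemma tens_append[simp]: "set xs \<subseteq> ob C \<Longrightarrow> set ys \<subseteq> ob C \<Longrightarrow>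
   tens_list C (xs @ ys) = tn C (tens_list C xs) (tens_list C ys)"
  by (induction xs) auto

lemma obs_take[simp]: "set L \<subseteq> ob C \<Longrightarrow> set (take k L) \<subseteq> ob C"
  by (meson order_trans set_take_subset)
lemma obs_drop[simp]: "set L \<subseteq> ob C \<Longrightarrow> set (drop k L) \<subseteq> ob C"
  by (meson order_trans set_drop_subset)
lemma obs_nth[simp]: "set L \<subseteq> ob C \<Longrightarrow> i < length L \<Longrightarrow> L ! i \<in> ob C"
  by (meson nth_mem subsetD)

lemma hex2: assumes A: "A \<in> ob C" and B: "B \<in> ob C" and D: "D \<in> ob C"
  shows "sy C (tn C A B) D = cmp C (tnm C (sy C A D) (idm C B)) (tnm C (idm C A) (sy C B D))"
proof -
  let ?h = "cmp C (tnm C (sy C A D) (idm C B)) (tnm C (idm C A) (sy C B D))"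
  have s: "sy C D (tn C A B) = cmp C (tnm C (idm C A) (sy C D B)) (tnm C (sy C D A) (idm C B))"
    using hex A B D by blast
  have "cmp C (tnm C (idm C A) (sy C B D)) (tnm C (idm C A) (sy C D B)) = 
        tnm C (cmp C (idm C A) (idm C A)) (cmp C (sy C B D) (sy C D B))"
    by (rule interchange[symmetric]) (simp_all add: A B D)
  also have "\<dots> = idm C (tn C A (tn C D B))" using A B D sy_inv[of D B] by simp
  finally have e1: "cmp C (tnm C (idm C A) (sy C B D)) (tnm C (idm C A) (sy C D B)) = idm C (tn C A (tn C D B))" .
  have "cmp C (tnm C (sy C A D) (idm C B)) (tnm C (sy C D A) (idm C B)) = 
        tnm C (cmp C (sy C A D) (sy C D A)) (cmp C (idm C B) (idm C B))"
    by (rule interchange[symmetric]) (simp_all add: A B D)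
  also have "\<dots> = idm C (tn C D (tn C A B))" using A B D sy_inv[of D A] by simp
  finally have e2: "cmp C (tnm C (sy C A D) (idm C B)) (tnm C (sy C D A) (idm C B)) = idm C (tn C D (tn C A B))" .
  have "cmp C ?h (sy C D (tn C A B)) = cmp C (tnm C (sy C A D) (idm C B))
      (cmp C (cmp C (tnm C (idm C A) (sy C B D)) (tnm C (idm C A) (sy C D B))) (tnm C (sy C D A) (idm C B)))"
    unfolding s using A B D by (simp add: cassoc)
  also have "\<dots> = idm C (tn C D (tn C A B))" unfolding e1 using A B D e2 by simp
  finally have h1: "cmp C ?h (sy C D (tn C A B)) = idm C (tn C D (tn C A B))" .
  have "sy C (tn C A B) D = cmp C (cmp C ?h (sy C D (tn C A B))) (sy C (tn C A B) D)"
    unfolding h1 using A B D by simp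
  also have "\<dots> = cmp C ?h (cmp C (sy C D (tn C A B)) (sy C (tn C A B) D))"
    using A B D by (simp add: cassoc)
  also have "\<dots> = ?h" using sy_inv[of "tn C A B" D] A B D by simp
  finally show ?thesis .
qed

end

definition rem :: "nat \<Rightarrow> 'a list \<Rightarrow> 'a list" where "rem k L = take k L @ drop (Suc k) L"
definition shft :: "nat \<Rightarrow> nat \<Rightarrow> nat" where "shft k x = (if x < k then x else x - 1)"
definition move :: "('o, 'm) pcat \<Rightarrow> 'o list \<Rightarrow> nat \<Rightarrow> 'm" where
  "move C L k = tnm C (sy C (tens_list C (take k L)) (L!k)) (idm C (tens_list C (drop (Suc k) L)))"
fun canon_n :: "('o, 'm) pcat \<Rightarrow> nat \<Rightarrow> 'o list \<Rightarrow> (nat \<Rightarrow> nat) \<Rightarrow> 'm" where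
  "canon_n C 0 L \<pi> = idm C (tens_list C L)"
| "canon_n C (Suc n) L \<pi> = cmp C (tnm C (idm C (L ! \<pi> 0))
      (canon_n C n (rem (\<pi> 0) L) (\<lambda>i. shft (\<pi> 0) (\<pi> (Suc i))))) (move C L (\<pi> 0))"
definition isperm :: "nat \<Rightarrow> (nat \<Rightarrow> nat) \<Rightarrow> bool" where
  "isperm n \<pi> \<longleftrightarrow> inj_on \<pi> {..<n} \<and> \<pi> ` {..<n} \<subseteq> {..<n}"

lemma isperm_red: assumes "isperm (Suc n) \<pi>" shows "isperm n (\<lambda>i. shft (\<pi> 0) (\<pi> (Suc i)))"
proof -
  have inj: "inj_on \<pi> {..<Suc n}" and rng: "\<And>i. i < Suc n \<Longrightarrow> \<pi> i < Suc n"
    using assms unfolding isperm_def by auto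
  have ne: "\<And>i. i < n \<Longrightarrow> \<pi> (Suc i) \<noteq> \<pi> 0" using inj by (auto dest: inj_onD)
  show ?thesis unfolding isperm_def
  proof
    show "inj_on (\<lambda>i. shft (\<pi> 0) (\<pi> (Suc i))) {..<n}"
    proof (rule inj_onI)
      fix x y assume x: "x \<in> {..<n}" and y: "y \<in> {..<n}" and e: "shft (\<pi> 0) (\<pi> (Suc x)) = shft (\<pi> 0) (\<pi> (Suc y))"
      have "\<pi> (Suc x) = \<pi> (Suc y)" using e ne[of x] ne[of y] x y unfolding shft_def by (auto split: if_splits)
      then show "x = y" using inj x y by (auto dest: inj_onD)
    qed
    show "(\<lambda>i. shft (\<pi> 0) (\<pi> (Suc i))) ` {..<n} \<subseteq> {..<n}"
      using rng ne unfolding shft_def by (force split: if_splits)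
  qed
qed

lemma isperm_lt: "isperm n \<pi> \<Longrightarrow> i < n \<Longrightarrow> \<pi> i < n" unfolding isperm_def by auto

lemma rem_length[simp]: "k < length L \<Longrightarrow> length (rem k L) = length L - 1"
  unfolding rem_def by simp

lemma rem_nth: "k < length L \<Longrightarrow> x < length L \<Longrightarrow> x \<noteq> k \<Longrightarrow> rem k L ! (shft k x) = L ! x"
  unfolding rem_def shft_def by (auto simp: nth_append min_def)

lemma canon_cong: "(\<And>i. i < n \<Longrightarrow> \<pi> i = \<pi>' i) \<Longrightarrow> canon_n C n L \<pi> = canon_n C n L \<pi>'"
proof (induction n arbitrary: L \<pi> \<pi>')
  case 0 then show ?case by simp
next
  case (Suc n)
  have "\<pi> 0 = \<pi>' 0" using Suc.prems by simp
  moreover have "canon_n C n (rem (\<pi> 0) L) (\<lambda>i. shft (\<pi> 0) (\<pi> (Suc i))) = canon_n C n (rem (\<pi> 0) L) (\<lambda>i. shft (\<pi> 0) (\<pi>' (Suc i)))"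
    by (rule Suc.IH) (simp add: Suc.prems)
  ultimately show ?case by simp
qed

context pc begin

lemma obs_rem[simp]: "set L \<subseteq> ob C \<Longrightarrow> set (rem k L) \<subseteq> ob C"
  unfolding rem_def using obs_drop obs_take by (metis Un_least set_append)

lemma tens_split: "set L \<subseteq> ob C \<Longrightarrow> k < length L \<Longrightarrow>
   tens_list C L = tn C (tens_list C (take k L)) (tn C (L ! k) (tens_list C (drop (Suc k) L)))"
  by (subst id_take_nth_drop[of k L]) (simp_all)

lemma move_typ: assumes "set L \<subseteq> ob C" "k < length L"
  shows "move C L k \<in> mor C" "dm C (move C L k) = tens_list C L"
    "cd C (move C L k) = tn C (L ! k) (tens_list C (rem k L))"
  using assms tens_split[OF assms] by (simp_all add: move_def rem_def)

lemma canon_typ: "set L \<subseteq> ob C \<Longrightarrow> length L = n \<Longrightarrow> isperm n \<pi> \<Longrightarrow>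
   canon_n C n L \<pi> \<in> mor C \<and> dm C (canon_n C n L \<pi>) = tens_list C L"
proof (induction n arbitrary: L \<pi>)
  case 0 then show ?case by simp
next
  case (Suc n)
  have k: "\<pi> 0 < length L" using Suc.prems isperm_lt by auto
  have IH: "canon_n C n (rem (\<pi> 0) L) (\<lambda>i. shft (\<pi> 0) (\<pi> (Suc i))) \<in> mor C \<and>
     dm C (canon_n C n (rem (\<pi> 0) L) (\<lambda>i. shft (\<pi> 0) (\<pi> (Suc i)))) = tens_list C (rem (\<pi> 0) L)"
    using Suc.IH[of "rem (\<pi> 0) L"] Suc.prems isperm_red k by simp
  show ?case using IH move_typ[OF _ k] Suc.prems k by simp
qed

end


context pc begin

lemma I1: "f \<in> mor C \<Longrightarrow> g \<in> mor C \<Longrightarrow> cmp C (tnm C f (idm C (cd C g))) (tnm C (idm C (dm C f)) g) = tnm C f g"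
  using interchange[of "idm C (dm C f)" f g "idm C (cd C g)"] by (simp add: dm_ob cd_ob)

lemma I2: "f \<in> mor C \<Longrightarrow> g \<in> mor C \<Longrightarrow> cmp C (tnm C (idm C (cd C f)) g) (tnm C f (idm C (dm C g))) = tnm C f g"
  using interchange[of f "idm C (cd C f)" "idm C (dm C g)" g] by (simp add: dm_ob cd_ob)

lemma loc_a: assumes ob: "P \<in> ob C" "A \<in> ob C" "B \<in> ob C" "R \<in> ob C"
  shows "cmp C (tnm C (sy C P B) (idm C (tn C A R))) (tnm C (tnm C (idm C P) (sy C A B)) (idm C R))
       = tnm C (sy C (tn C P A) B) (idm C R)"
proof -
  have "tnm C (sy C (tn C P A) B) (idm C R) = tnm C (cmp C (tnm C (sy C P B) (idm C A)) (tnm C (idm C P) (sy C A B))) (cmp C (idm C R) (idm C R))"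
    using hex2 ob by simp
  also have "\<dots> = cmp C (tnm C (tnm C (sy C P B) (idm C A)) (idm C R)) (tnm C (tnm C (idm C P) (sy C A B)) (idm C R))"
    by (rule interchange) (simp_all add: ob)
  also have "\<dots> = cmp C (tnm C (sy C P B) (idm C (tn C A R))) (tnm C (tnm C (idm C P) (sy C A B)) (idm C R))"
    using ob by simp
  finally show ?thesis by simp
qed

lemma loc_b: assumes ob: "P \<in> ob C" "A \<in> ob C" "B \<in> ob C" "R \<in> ob C"
  shows "cmp C (tnm C (sy C (tn C P B) A) (idm C R)) (tnm C (tnm C (idm C P) (sy C A B)) (idm C R))
       = tnm C (sy C P A) (idm C (tn C B R))"
proof -
  have "cmp C (tnm C (sy C (tn C P B) A) (idm C R)) (tnm C (tnm C (idm C P) (sy C A B)) (idm C R))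
     = tnm C (cmp C (sy C (tn C P B) A) (tnm C (idm C P) (sy C A B))) (cmp C (idm C R) (idm C R))"
    by (rule interchange[symmetric]) (simp_all add: ob)
  also have "cmp C (sy C (tn C P B) A) (tnm C (idm C P) (sy C A B)) = 
      cmp C (tnm C (sy C P A) (idm C B)) (cmp C (tnm C (idm C P) (sy C B A)) (tnm C (idm C P) (sy C A B)))"
    using hex2[of P B A] ob by (simp add: cassoc)
  also have "cmp C (tnm C (idm C P) (sy C B A)) (tnm C (idm C P) (sy C A B)) = tnm C (cmp C (idm C P) (idm C P)) (cmp C (sy C B A) (sy C A B))"
    by (rule interchange[symmetric]) (simp_all add: ob)
  finally show ?thesis using ob sy_inv[of A B] by simp
qed

lemma loc_c: assumes ob: "Q \<in> ob C" "D \<in> ob C" "M \<in> ob C" "A \<in> ob C" "B \<in> ob C" "R \<in> ob C"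
  shows "cmp C (tnm C (sy C Q D) (idm C (tn C M (tn C B (tn C A R))))) (tnm C (tnm C (idm C (tn C Q (tn C D M))) (sy C A B)) (idm C R))
       = cmp C (tnm C (idm C D) (tnm C (tnm C (idm C (tn C Q M)) (sy C A B)) (idm C R))) (tnm C (sy C Q D) (idm C (tn C M (tn C A (tn C B R)))))"
proof -
  define g where "g = tnm C (idm C M) (tnm C (sy C A B) (idm C R))"
  have g: "g \<in> mor C" "dm C g = tn C M (tn C A (tn C B R))" "cd C g = tn C M (tn C B (tn C A R))"
    unfolding g_def using ob by simp_all
  have e1: "tnm C (tnm C (idm C (tn C Q (tn C D M))) (sy C A B)) (idm C R) = tnm C (idm C (tn C Q D)) g"
    unfolding g_def using ob by (simp del: tnm_assoc add: tnm_assoc[symmetric])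
  have e2: "tnm C (idm C D) (tnm C (tnm C (idm C (tn C Q M)) (sy C A B)) (idm C R)) = tnm C (idm C (tn C D Q)) g"
    unfolding g_def using ob by (simp del: tnm_assoc add: tnm_assoc[symmetric])
  have "cmp C (tnm C (sy C Q D) (idm C (cd C g))) (tnm C (idm C (dm C (sy C Q D))) g) = tnm C (sy C Q D) g"
    using I1[of "sy C Q D" g] g ob by simp
  moreover have "cmp C (tnm C (idm C (cd C (sy C Q D))) g) (tnm C (sy C Q D) (idm C (dm C g))) = tnm C (sy C Q D) g"
    using I2[of "sy C Q D" g] g ob by simp
  ultimately show ?thesis unfolding e1 e2 using g ob by simp
qed

lemma loc_d: assumes ob: "P \<in> ob C" "A \<in> ob C" "B \<in> ob C" "N \<in> ob C" "D \<in> ob C" "R \<in> ob C"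
  shows "cmp C (tnm C (sy C (tn C P (tn C B (tn C A N))) D) (idm C R)) (tnm C (tnm C (idm C P) (sy C A B)) (idm C (tn C N (tn C D R))))
       = cmp C (tnm C (idm C D) (tnm C (tnm C (idm C P) (sy C A B)) (idm C (tn C N R)))) (tnm C (sy C (tn C P (tn C A (tn C B N))) D) (idm C R))"
proof -
  define f where "f = tnm C (tnm C (idm C P) (sy C A B)) (idm C N)"
  have f: "f \<in> mor C" "dm C f = tn C P (tn C A (tn C B N))" "cd C f = tn C P (tn C B (tn C A N))"
    unfolding f_def using ob by simp_all
  have e1: "tnm C (tnm C (idm C P) (sy C A B)) (idm C (tn C N (tn C D R))) = tnm C (tnm C f (idm C D)) (idm C R)"
    unfolding f_def using ob by simp
  have e2: "tnm C (idm C D) (tnm C (tnm C (idm C P) (sy C A B)) (idm C (tn C N R))) = tnm C (tnm C (idm C D) f) (idm C R)"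
    unfolding f_def using ob by simp
  have nat: "cmp C (sy C (cd C f) D) (tnm C f (idm C D)) = cmp C (tnm C (idm C D) f) (sy C (dm C f) D)"
    using sy_nat[of f "idm C D"] f ob by simp
  have "cmp C (tnm C (sy C (cd C f) D) (idm C R)) (tnm C (tnm C f (idm C D)) (idm C R)) 
      = tnm C (cmp C (sy C (cd C f) D) (tnm C f (idm C D))) (cmp C (idm C R) (idm C R))"
    by (rule interchange[symmetric]) (simp_all add: ob f)
  also have "\<dots> = tnm C (cmp C (tnm C (idm C D) f) (sy C (dm C f) D)) (cmp C (idm C R) (idm C R))"
    unfolding nat ..
  also have "\<dots> = cmp C (tnm C (tnm C (idm C D) f) (idm C R)) (tnm C (sy C (dm C f) D) (idm C R))"
    by (rule interchange) (simp_all add: ob f)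
  finally show ?thesis unfolding e1 e2 using f by simp
qed

end


context pc begin

lemma lem_a: assumes "set xs \<subseteq> ob C" "a \<in> ob C" "b \<in> ob C" "set ys \<subseteq> ob C"
  shows "cmp C (move C (xs@b#a#ys) (length xs)) (step_mor C (xs@a#b#ys) (length xs)) = move C (xs@a#b#ys) (Suc (length xs))"
  using loc_a[of "tens_list C xs" a b "tens_list C ys"] assms
  by (simp add: move_def step_mor_def nth_append)

lemma lem_b: assumes "set xs \<subseteq> ob C" "a \<in> ob C" "b \<in> ob C" "set ys \<subseteq> ob C"
  shows "cmp C (move C (xs@b#a#ys) (Suc (length xs))) (step_mor C (xs@a#b#ys) (length xs)) = move C (xs@a#b#ys) (length xs)"
  using loc_b[of "tens_list C xs" a b "tens_list C ys"] assms
  by (simp add: move_def step_mor_def nth_append)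

lemma lem_c: assumes "set us \<subseteq> ob C" "d \<in> ob C" "set vs \<subseteq> ob C" "a \<in> ob C" "b \<in> ob C" "set ys \<subseteq> ob C"
  shows "cmp C (move C (us@d#vs@b#a#ys) (length us)) (step_mor C (us@d#vs@a#b#ys) (length us + 1 + length vs))
    = cmp C (tnm C (idm C d) (step_mor C (us@vs@a#b#ys) (length us + length vs))) (move C (us@d#vs@a#b#ys) (length us))"
  using loc_c[of "tens_list C us" d "tens_list C vs" a b "tens_list C ys"] assms
  by (simp add: move_def step_mor_def nth_append numeral_3_eq_3)

lemma lem_d: assumes "set xs \<subseteq> ob C" "a \<in> ob C" "b \<in> ob C" "set vs \<subseteq> ob C" "d \<in> ob C" "set ys \<subseteq> ob C"
  shows "cmp C (move C (xs@b#a#vs@d#ys) (length xs + 2 + length vs)) (step_mor C (xs@a#b#vs@d#ys) (length xs))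
    = cmp C (tnm C (idm C d) (step_mor C (xs@a#b#vs@ys) (length xs))) (move C (xs@a#b#vs@d#ys) (length xs + 2 + length vs))"
  using loc_d[of "tens_list C xs" a b "tens_list C vs" d "tens_list C ys"] assms
  by (simp add: move_def step_mor_def nth_append numeral_3_eq_3)

end





lemma decomp2: "Suc j < length L \<Longrightarrow> \<exists>xs a b ys. L = xs@a#b#ys \<and> length xs = j"
  using id_take_nth_drop[of j L] Cons_nth_drop_Suc[of "Suc j" L]
  by (intro exI[of _ "take j L"] exI[of _ "L!j"] exI[of _ "L!Suc j"] exI[of _ "drop (Suc (Suc j)) L"]) simp

lemma decomp1: "k < length L \<Longrightarrow> \<exists>us d vs. L = us @ d # vs \<and> length us = k"
  using id_take_nth_drop[of k L]
  by (intro exI[of _ "take k L"] exI[of _ "L!k"] exI[of _ "drop (Suc k) L"]) simp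

lemma swap_eq[simp]: "swap_list (xs@a#b#ys) (length xs) = xs@b#a#ys"
  by (simp add: swap_list_def list_update_append nth_append)

lemma rem_eq[simp]: "rem (length xs) (xs@d#ys) = xs@ys"
  by (simp add: rem_def)

lemma rem_eq2[simp]: "rem (Suc (length xs)) (xs@a#b#ys) = xs@a#ys"
  by (simp add: rem_def)

context pc begin

lemma step_typ: assumes "set L \<subseteq> ob C" "Suc j < length L"
  shows "step_mor C L j \<in> mor C \<and> dm C (step_mor C L j) = tens_list C L \<and> cd C (step_mor C L j) = tens_list C (swap_list L j)"
proof -
  obtain xs a b ys where L: "L = xs@a#b#ys" and lx: "length xs = j"
    using decomp2[OF assms(2)] by blast
  have obs: "set xs \<subseteq> ob C" "a \<in> ob C" "b \<in> ob C" "set ys \<subseteq> ob C" using assms(1) L by auto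
  show ?thesis unfolding L lx[symmetric] using obs by (simp add: step_mor_def nth_append)
qed

lemma key: "set L \<subseteq> ob C \<Longrightarrow> length L = n \<Longrightarrow> Suc j < n \<Longrightarrow> isperm n \<pi> \<Longrightarrow>
   cmp C (canon_n C n (swap_list L j) \<pi>) (step_mor C L j) = canon_n C n L (adjswap j \<circ> \<pi>)"
proof (induction n arbitrary: L j \<pi>)
  case 0 then show ?case by simp
next
  case (Suc n)
  note obL = Suc.prems(1) and lenL = Suc.prems(2) and jl = Suc.prems(3) and pp = Suc.prems(4)
  define k where "k = \<pi> 0"
  define L' where "L' = swap_list L j"
  define pt where "pt = (\<lambda>i. shft k (\<pi> (Suc i)))"
  have k: "k < Suc n" using pp isperm_lt k_def by auto
  have ne: "\<And>i. i < n \<Longrightarrow> \<pi> (Suc i) \<noteq> k" using pp unfolding isperm_def k_def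
    by (metis Suc_mono inj_on_eq_iff lessThan_iff nat.distinct(1) zero_less_Suc)
  have ptlt: "\<And>i. i < n \<Longrightarrow> \<pi> (Suc i) < Suc n" using pp isperm_lt by blast
  have ptp: "isperm n pt" using isperm_red[OF pp] unfolding pt_def k_def .
  have "\<exists>xs a b ys. L = xs@a#b#ys \<and> length xs = j" using decomp2[of j L] jl lenL by simp
  then obtain xs a b ys where L: "L = xs@a#b#ys" and lx: "length xs = j" by blast
  have L'e: "L' = xs@b#a#ys" unfolding L'_def L lx[symmetric] by simp
  have obs: "set xs \<subseteq> ob C" "a \<in> ob C" "b \<in> ob C" "set ys \<subseteq> ob C" using obL L by auto
  have obL': "set L' \<subseteq> ob C" using obs L'e by auto
  have lenL': "length L' = Suc n" using L'e L lenL by simp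
  have step: "step_mor C L j \<in> mor C" "cd C (step_mor C L j) = tens_list C L'"
    using step_typ[OF obL] jl lenL L'_def by auto
  have mv: "move C L' k \<in> mor C" "dm C (move C L' k) = tens_list C L'"
     "cd C (move C L' k) = tn C (L' ! k) (tens_list C (rem k L'))"
    using move_typ[OF obL'] k lenL' by auto
  have cn: "canon_n C n (rem k L') pt \<in> mor C" "dm C (canon_n C n (rem k L') pt) = tens_list C (rem k L')"
    using canon_typ[of "rem k L'" n pt] obL' k lenL' ptp by auto
  have L'k: "L' ! k \<in> ob C" using obL' k lenL' by simp
  have "cmp C (canon_n C (Suc n) L' \<pi>) (step_mor C L j) = 
     cmp C (cmp C (tnm C (idm C (L'!k)) (canon_n C n (rem k L') pt)) (move C L' k)) (step_mor C L j)"
    by (simp add: k_def[symmetric] pt_def[symmetric])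
  also have "\<dots> = cmp C (tnm C (idm C (L'!k)) (canon_n C n (rem k L') pt)) (cmp C (move C L' k) (step_mor C L j))"
    using step mv cn L'k by (simp add: cassoc)
  finally have LHS: "cmp C (canon_n C (Suc n) L' \<pi>) (step_mor C L j) = 
     cmp C (tnm C (idm C (L'!k)) (canon_n C n (rem k L') pt)) (cmp C (move C L' k) (step_mor C L j))" .
  have RHS: "canon_n C (Suc n) L (adjswap j \<circ> \<pi>) = cmp C (tnm C (idm C (L ! adjswap j k))
      (canon_n C n (rem (adjswap j k) L) (\<lambda>i. shft (adjswap j k) (adjswap j (\<pi> (Suc i)))))) (move C L (adjswap j k))"
    by (simp add: k_def)
  consider "k = j" | "k = Suc j" | "k < j" | "k > Suc j" by linarith
  consider "k = j" | "k = Suc j" | "k < j" | "k > Suc j" by linarith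
  then show ?case
  proof cases
    case 1
    have aj: "adjswap j k = Suc j" using 1 by (simp add: adjswap_def)
    have m: "cmp C (move C L' k) (step_mor C L j) = move C L (Suc j)"
      using lem_a[OF obs] unfolding L L'e 1 lx[symmetric] .
    have cg: "canon_n C n (rem k L') pt = canon_n C n (rem (Suc j) L) (\<lambda>i. shft (Suc j) (adjswap j (\<pi> (Suc i))))"
    proof -
      have e: "rem k L' = rem (Suc j) L" unfolding L L'e 1 lx[symmetric] by simp
      have p: "\<And>i. i < n \<Longrightarrow> pt i = shft (Suc j) (adjswap j (\<pi> (Suc i)))"
      proof -
        fix i assume "i < n"
        then have "\<pi> (Suc i) \<noteq> k" by (rule ne)
        then show "pt i = shft (Suc j) (adjswap j (\<pi> (Suc i)))" using 1 unfolding pt_def shft_def adjswap_def by auto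
      qed
      show ?thesis unfolding e by (rule canon_cong) (erule p)
    qed
    have "L' ! k = L ! Suc j" unfolding L L'e 1 lx[symmetric] by (simp add: nth_append)
    then show ?thesis unfolding L'_def[symmetric] LHS RHS aj m cg by simp
  next
    case 2
    have aj: "adjswap j k = j" using 2 by (simp add: adjswap_def)
    have m: "cmp C (move C L' k) (step_mor C L j) = move C L j"
      using lem_b[OF obs] unfolding L L'e 2 lx[symmetric] .
    have cg: "canon_n C n (rem k L') pt = canon_n C n (rem j L) (\<lambda>i. shft j (adjswap j (\<pi> (Suc i))))"
    proof -
      have e: "rem k L' = rem j L" unfolding L L'e 2 lx[symmetric] by simp
      have p: "\<And>i. i < n \<Longrightarrow> pt i = shft j (adjswap j (\<pi> (Suc i)))"
      proof -
        fix i assume "i < n"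
        then have "\<pi> (Suc i) \<noteq> k" by (rule ne)
        then show "pt i = shft j (adjswap j (\<pi> (Suc i)))" using 2 unfolding pt_def shft_def adjswap_def by auto
      qed
      show ?thesis unfolding e by (rule canon_cong) (erule p)
    qed
    have "L' ! k = L ! j" unfolding L L'e 2 lx[symmetric] by (simp add: nth_append)
    then show ?thesis unfolding L'_def[symmetric] LHS RHS aj m cg by simp
  next
    case 3
    have aj: "adjswap j k = k" using 3 by (simp add: adjswap_def)
    obtain us d vs where xs: "xs = us @ d # vs" and lu: "length us = k"
      using decomp1[of k xs] 3 lx by auto
    have obs2: "set us \<subseteq> ob C" "d \<in> ob C" "set vs \<subseteq> ob C" using obs xs by auto
    have jv: "j = length us + 1 + length vs" using lx xs by simp
    define L0 where "L0 = us @ vs @ a # b # ys"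
    have m: "cmp C (move C L' k) (step_mor C L j) = cmp C (tnm C (idm C d) (step_mor C L0 (length us + length vs))) (move C L k)"
      using lem_c[OF obs2 obs(2-4)] unfolding L L'e xs lu[symmetric] jv L0_def by simp
    have r0: "rem k L' = swap_list L0 (length us + length vs)" unfolding L'e xs lu[symmetric] L0_def
      using swap_eq[of "us @ vs" a b ys] by simp
    have obL0: "set L0 \<subseteq> ob C" using obs obs2 L0_def by auto
    have lenL0: "length L0 = n" using L0_def lenL L xs by simp
    have st0: "step_mor C L0 (length us + length vs) \<in> mor C" "cd C (step_mor C L0 (length us + length vs)) = tens_list C (rem k L')"
      using step_typ[OF obL0] lenL0 jl jv r0 by auto
    have IH: "cmp C (canon_n C n (rem k L') pt) (step_mor C L0 (length us + length vs)) = canon_n C n L0 (adjswap (length us + length vs) \<circ> pt)"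
      unfolding r0 by (rule Suc.IH[OF obL0 lenL0 _ ptp]) (use jl jv lenL in simp)
    have L'k: "L' ! k = d" "L ! k = d" unfolding L'e L xs lu[symmetric] by (simp_all add: nth_append)
    have cg: "canon_n C n L0 (adjswap (length us + length vs) \<circ> pt) = canon_n C n (rem k L) (\<lambda>i. shft k (adjswap j (\<pi> (Suc i))))"
    proof -
      have e: "rem k L = L0" unfolding L xs lu[symmetric] L0_def by simp
      have p: "\<And>i. i < n \<Longrightarrow> (adjswap (length us + length vs) \<circ> pt) i = shft k (adjswap j (\<pi> (Suc i)))"
      proof -
        fix i assume "i < n"
        then have "\<pi> (Suc i) \<noteq> k" by (rule ne)
        then show "(adjswap (length us + length vs) \<circ> pt) i = shft k (adjswap j (\<pi> (Suc i)))" using 3 jv lu unfolding pt_def shft_def adjswap_def by auto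
      qed
      show ?thesis unfolding e by (rule canon_cong) (erule p)
    qed
    have mvL: "move C L k \<in> mor C" "cd C (move C L k) = tn C d (tens_list C L0)"
      using move_typ[OF obL, of k] k lenL L'k L xs lu L0_def by auto
    have "cmp C (tnm C (idm C d) (canon_n C n (rem k L') pt)) (cmp C (tnm C (idm C d) (step_mor C L0 (length us + length vs))) (move C L k))
       = cmp C (cmp C (tnm C (idm C d) (canon_n C n (rem k L') pt)) (tnm C (idm C d) (step_mor C L0 (length us + length vs)))) (move C L k)"
      using mvL st0 cn obs2 step_typ[OF obL0] lenL0 jl jv by (simp add: cassoc)
    also have "\<dots> = cmp C (tnm C (cmp C (idm C d) (idm C d)) (cmp C (canon_n C n (rem k L') pt) (step_mor C L0 (length us + length vs)))) (move C L k)"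
      using interchange[of "idm C d" "idm C d" "step_mor C L0 (length us + length vs)" "canon_n C n (rem k L') pt"] st0 cn obs2 by simp
    finally show ?thesis unfolding L'_def[symmetric] LHS RHS aj m IH cg L'k using obs2 by simp
  next
    case 4
    have aj: "adjswap j k = k" using 4 by (simp add: adjswap_def)
    have "k - j - 2 < length ys" using 4 lx k lenL L by simp
    then have "\<exists>vs d ys'. ys = vs @ d # ys' \<and> length vs = k - j - 2" using decomp1[of "k - j - 2" ys] by blast
    then obtain vs d ys' where ys: "ys = vs @ d # ys'" and lv: "length vs = k - j - 2" by blast
    have obs2: "set vs \<subseteq> ob C" "d \<in> ob C" "set ys' \<subseteq> ob C" using obs ys by auto
    have kv: "k = length xs + 2 + length vs" using lx lv 4 by simp
    define L0 where "L0 = xs @ a # b # vs @ ys'"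
    have m: "cmp C (move C L' k) (step_mor C L j) = cmp C (tnm C (idm C d) (step_mor C L0 j)) (move C L k)"
      using lem_d[OF obs(1-3) obs2] unfolding L L'e ys kv L0_def lx by simp
    have r0: "rem k L' = swap_list L0 j" unfolding L'e ys kv L0_def lx[symmetric]
      using swap_eq[of xs a b "vs @ ys'"] rem_eq[of "xs @ b # a # vs" d ys'] by simp
    have obL0: "set L0 \<subseteq> ob C" using obs obs2 L0_def by auto
    have lenL0: "length L0 = n" using L0_def lenL L ys by simp
    have st0: "step_mor C L0 j \<in> mor C" "cd C (step_mor C L0 j) = tens_list C (rem k L')"
      using step_typ[OF obL0] lenL0 jl r0 L0_def lx by auto
    have IH: "cmp C (canon_n C n (rem k L') pt) (step_mor C L0 j) = canon_n C n L0 (adjswap j \<circ> pt)"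
      unfolding r0 by (rule Suc.IH[OF obL0 lenL0 _ ptp]) (use lenL0 L0_def lx in simp)
    have L'k: "L' ! k = d" "L ! k = d" unfolding L'e L ys kv by (simp_all add: nth_append)
    have cg: "canon_n C n L0 (adjswap j \<circ> pt) = canon_n C n (rem k L) (\<lambda>i. shft k (adjswap j (\<pi> (Suc i))))"
    proof -
      have e: "rem k L = L0" unfolding L ys kv L0_def using rem_eq[of "xs @ a # b # vs" d ys'] by simp
      have p: "\<And>i. i < n \<Longrightarrow> (adjswap j \<circ> pt) i = shft k (adjswap j (\<pi> (Suc i)))"
      proof -
        fix i assume "i < n"
        then have "\<pi> (Suc i) \<noteq> k" by (rule ne)
        then show "(adjswap j \<circ> pt) i = shft k (adjswap j (\<pi> (Suc i)))" using 4 unfolding pt_def shft_def adjswap_def by auto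
      qed
      show ?thesis unfolding e by (rule canon_cong) (erule p)
    qed
    have mvL: "move C L k \<in> mor C" "cd C (move C L k) = tn C d (tens_list C L0)"
      using move_typ[OF obL, of k] k lenL L'k L ys kv L0_def rem_eq[of "xs @ a # b # vs" d ys'] by auto
    have "cmp C (tnm C (idm C d) (canon_n C n (rem k L') pt)) (cmp C (tnm C (idm C d) (step_mor C L0 j)) (move C L k))
       = cmp C (cmp C (tnm C (idm C d) (canon_n C n (rem k L') pt)) (tnm C (idm C d) (step_mor C L0 j))) (move C L k)"
      using mvL st0 cn obs2 step_typ[OF obL0] lenL0 jl L0_def lx by (simp add: cassoc)
    also have "\<dots> = cmp C (tnm C (cmp C (idm C d) (idm C d)) (cmp C (canon_n C n (rem k L') pt) (step_mor C L0 j))) (move C L k)"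
      using interchange[of "idm C d" "idm C d" "step_mor C L0 j" "canon_n C n (rem k L') pt"] st0 cn obs2 by simp
    finally show ?thesis unfolding L'_def[symmetric] LHS RHS aj m IH cg L'k using obs2 by simp
  qed
qed

end





lemma isperm_surj: "isperm n \<pi> \<Longrightarrow> p < n \<Longrightarrow> \<exists>i<n. \<pi> i = p"
proof -
  assume a: "isperm n \<pi>" "p < n"
  have "\<pi> ` {..<n} = {..<n}" using endo_inj_surj[of "{..<n}" \<pi>] a(1) unfolding isperm_def by auto
  then have "p \<in> \<pi> ` {..<n}" using a(2) by simp
  then show ?thesis by auto
qed

lemma isperm_comp: "isperm n f \<Longrightarrow> isperm n g \<Longrightarrow> isperm n (f \<circ> g)"
  unfolding isperm_def by (auto intro: comp_inj_on inj_on_subset simp: image_subset_iff)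

lemma isperm_adjswap: "Suc j < n \<Longrightarrow> isperm n (adjswap j)"
  unfolding isperm_def adjswap_def by (auto simp: inj_on_def)

lemma isperm_perm_of: "(\<forall>j\<in>set js. Suc j < n) \<Longrightarrow> isperm n (perm_of js)"
proof (induction js)
  case Nil then show ?case by (simp add: isperm_def)
next
  case (Cons a js)
  have "isperm n (adjswap a \<circ> perm_of js)" using Cons by (intro isperm_comp isperm_adjswap) auto
  then show ?case by (simp add: comp_def)
qed

lemma perm_of_append: "perm_of (xs @ ys) = perm_of xs \<circ> perm_of ys"
  by (induction xs) auto

lemma adjswap_invol[simp]: "adjswap j (adjswap j x) = x"
  unfolding adjswap_def by auto

lemma perm_of_rev: "perm_of (xs @ rev xs) x = x"
proof (induction xs arbitrary: x)
  case Nil then show ?case by simp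
next
  case (Cons a xs)
  have "perm_of ((a # xs) @ rev (a # xs)) = adjswap a \<circ> perm_of (xs @ rev xs) \<circ> adjswap a"
    by (simp add: perm_of_append comp_assoc)
  then show ?case using Cons by simp
qed

lemma perm_of_fix: "(\<forall>j\<in>set js. Suc j < n) \<Longrightarrow> perm_of js n = n"
  by (induction js) (auto simp: adjswap_def)

lemma perm_of_rev_upt: "t \<le> n \<Longrightarrow> perm_of (rev [t..<n]) t = n"
proof (induction n)
  case 0 then show ?case by simp
next
  case (Suc n)
  show ?case
  proof (cases "t = Suc n")
    case True then show ?thesis by simp
  next
    case False
    then have "t \<le> n" using Suc by simp
    then show ?thesis using Suc by (simp add: adjswap_def)
  qed
qed

lemma word_exists: "isperm n \<pi> \<Longrightarrow> \<exists>js. (\<forall>j\<in>set js. Suc j < n) \<and> (\<forall>i<n. perm_of js i = \<pi> i)"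
proof (induction n arbitrary: \<pi>)
  case 0 then show ?case by auto
next
  case (Suc n)
  define t where "t = \<pi> n"
  have t: "t < Suc n" using Suc.prems isperm_lt t_def by auto
  define \<pi>0 where "\<pi>0 = perm_of (rev [t..<n]) \<circ> \<pi>"
  have w: "\<forall>j\<in>set (rev [t..<n]). Suc j < Suc n" by auto
  have p0: "isperm (Suc n) \<pi>0" unfolding \<pi>0_def using isperm_comp isperm_perm_of[OF w] Suc.prems by blast
  have p0n: "\<pi>0 n = n" using perm_of_rev_upt[of t n] t by (simp add: \<pi>0_def t_def)
  have "isperm n \<pi>0"
    unfolding isperm_def
  proof
    show "inj_on \<pi>0 {..<n}" using p0 unfolding isperm_def by (auto intro: inj_on_subset)
    show "\<pi>0 ` {..<n} \<subseteq> {..<n}"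
    proof
      fix y assume "y \<in> \<pi>0 ` {..<n}"
      then obtain i where i: "i < n" "y = \<pi>0 i" by auto
      have "i \<noteq> n" using i by simp
      then have "\<pi>0 i \<noteq> \<pi>0 n" using p0 i(1) unfolding isperm_def inj_on_def by auto
      moreover have "\<pi>0 i < Suc n" using p0 i isperm_lt by auto
      ultimately show "y \<in> {..<n}" using i p0n by auto
    qed
  qed
  then obtain js' where js': "\<forall>j\<in>set js'. Suc j < n" "\<forall>i<n. perm_of js' i = \<pi>0 i"
    using Suc.IH by blast
  have js'n: "perm_of js' n = n" using perm_of_fix js'(1) by blast
  have all: "\<forall>i<Suc n. perm_of js' i = \<pi>0 i" using js' js'n p0n less_Suc_eq by auto
  show ?case
  proof (intro exI conjI)
    show "\<forall>j\<in>set ([t..<n] @ js'). Suc j < Suc n" using js'(1) by auto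
    show "\<forall>i<Suc n. perm_of ([t..<n] @ js') i = \<pi> i"
    proof (intro allI impI)
      fix i assume "i < Suc n"
      then have "perm_of ([t..<n] @ js') i = perm_of [t..<n] (perm_of (rev [t..<n]) (\<pi> i))"
        using all by (simp add: perm_of_append \<pi>0_def)
      also have "\<dots> = \<pi> i" using perm_of_rev[of "[t..<n]"] by (simp add: perm_of_append)
      finally show "perm_of ([t..<n] @ js') i = \<pi> i" .
    qed
  qed
qed

context pc begin

lemma tens_all_un: "(\<forall>x\<in>set xs. x = un C) \<Longrightarrow> tens_list C xs = un C"
  by (induction xs) auto

lemma canon_mono: "set L \<subseteq> ob C \<Longrightarrow> length L = n \<Longrightarrow> isperm n \<pi> \<Longrightarrow>
  (\<forall>i i'. i < i' \<longrightarrow> i' < n \<longrightarrow> L ! (\<pi> i) \<noteq> un C \<longrightarrow> L ! (\<pi> i') \<noteq> un C \<longrightarrow> \<pi> i < \<pi> i') \<Longrightarrow>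
  canon_n C n L \<pi> = idm C (tens_list C L)"
proof (induction n arbitrary: L \<pi>)
  case 0 then show ?case by simp
next
  case (Suc n)
  note obL = Suc.prems(1) and lenL = Suc.prems(2) and pp = Suc.prems(3) and mono = Suc.prems(4)
  define k where "k = \<pi> 0"
  define pt where "pt = (\<lambda>i. shft k (\<pi> (Suc i)))"
  have k: "k < length L" using pp isperm_lt k_def lenL by auto
  have ne: "\<And>i. i < n \<Longrightarrow> \<pi> (Suc i) \<noteq> k" using pp unfolding isperm_def k_def
    by (metis Suc_mono inj_on_eq_iff lessThan_iff nat.distinct(1) zero_less_Suc)
  have ptlt: "\<And>i. i < n \<Longrightarrow> \<pi> (Suc i) < length L" using pp isperm_lt lenL by auto
  have ptp: "isperm n pt" using isperm_red[OF pp] unfolding pt_def k_def .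
  have obr: "set (rem k L) \<subseteq> ob C" using obL by simp
  have lr: "length (rem k L) = n" using k lenL by simp
  have IH: "canon_n C n (rem k L) pt = idm C (tens_list C (rem k L))"
  proof (rule Suc.IH[OF obr lr ptp], intro allI impI)
    fix i i' assume ii: "i < i'" "i' < n" "rem k L ! pt i \<noteq> un C" "rem k L ! pt i' \<noteq> un C"
    have i_n: "i < n" using ii by simp
    have e: "rem k L ! pt i = L ! \<pi> (Suc i)" "rem k L ! pt i' = L ! \<pi> (Suc i')"
      using rem_nth[OF k ptlt[OF i_n] ne[OF i_n]] rem_nth[OF k ptlt[OF ii(2)] ne[OF ii(2)]] unfolding pt_def by auto
    have "\<pi> (Suc i) < \<pi> (Suc i')" using mono ii e by auto
    then show "pt i < pt i'" unfolding pt_def shft_def using ne[of i] ne[of i'] ii by auto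
  qed
  have mv: "move C L k = idm C (tens_list C L)"
  proof (cases "L ! k = un C")
    case True
    then show ?thesis using tens_split[OF obL k] obL k by (simp add: move_def)
  next
    case False
    have "\<forall>x\<in>set (take k L). x = un C"
    proof
      fix x assume "x \<in> set (take k L)"
      then obtain p where p: "p < k" "x = L ! p" using k by (auto simp: in_set_conv_nth)
      obtain i where i: "i < Suc n" "\<pi> i = p" using isperm_surj[OF pp, of p] p k lenL by auto
      show "x = un C"
      proof (rule ccontr)
        assume "x \<noteq> un C"
        have "i \<noteq> 0" using i p k_def by (cases "i = 0") auto
        moreover have "L ! \<pi> 0 \<noteq> un C" "L ! \<pi> i \<noteq> un C" using False k_def p i \<open>x \<noteq> un C\<close> by auto
        ultimately have "\<pi> 0 < \<pi> i" using mono i by blast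
        then show False using i p k_def by auto
      qed
    qed
    then have "tens_list C (take k L) = un C" by (rule tens_all_un)
    then show ?thesis using tens_split[OF obL k] obL k by (simp add: move_def)
  qed
  have "canon_n C (Suc n) L \<pi> = cmp C (tnm C (idm C (L ! k)) (canon_n C n (rem k L) pt)) (move C L k)"
    by (simp add: k_def pt_def)
  also have "\<dots> = idm C (tens_list C L)"
    unfolding IH mv using move_typ(3)[OF obL k] mv obL k by simp
  finally show ?case .
qed

lemma steps_canon: "set L \<subseteq> ob C \<Longrightarrow> (\<forall>j\<in>set js. Suc j < length L) \<Longrightarrow>
   steps_mor C L js = canon_n C (length L) L (perm_of js)"
proof (induction js arbitrary: L)
  case Nil
  have "canon_n C (length L) L (perm_of []) = idm C (tens_list C L)"
    by (rule canon_mono) (use Nil in \<open>auto simp: isperm_def\<close>)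
  then show ?case by (metis steps_mor.simps(1))
next
  case (Cons j js)
  have obs: "set (swap_list L j) \<subseteq> ob C" "length (swap_list L j) = length L"
    using Cons.prems unfolding swap_list_def by (auto simp: set_update_subsetI)
  have "steps_mor C L (j # js) = cmp C (canon_n C (length L) (swap_list L j) (perm_of js)) (step_mor C L j)"
    using Cons.IH[OF obs(1)] obs(2) Cons.prems by simp
  also have "\<dots> = canon_n C (length L) L (adjswap j \<circ> perm_of js)"
    by (rule key) (use Cons.prems isperm_perm_of in auto)
  finally show ?case by (simp add: comp_def)
qed

lemma coh_id: assumes obL: "set L \<subseteq> ob C" and bij: "bij_betw \<sigma> {..<length L} {..<length L}"
  and mono: "\<forall>p q. p < length L \<longrightarrow> q < length L \<longrightarrow> p < q \<longrightarrow> L ! p \<noteq> un C \<longrightarrow> L ! q \<noteq> un C \<longrightarrow> \<sigma> p < \<sigma> q"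
  shows "coh C L \<sigma> = idm C (tens_list C L)"
proof -
  let ?n = "length L"
  define \<pi> where "\<pi> = inv_into {..<?n} \<sigma>"
  have pp: "isperm ?n \<pi>" using bij_betw_inv_into[OF bij] unfolding bij_betw_def isperm_def \<pi>_def by auto
  have sp: "\<And>i. i < ?n \<Longrightarrow> \<sigma> (\<pi> i) = i" unfolding \<pi>_def using bij
    by (meson bij_betw_inv_into_right lessThan_iff)
  obtain js where js: "\<forall>j\<in>set js. Suc j < ?n" "\<forall>i<?n. perm_of js i = \<pi> i"
    using word_exists[OF pp] by blast
  have ex: "\<exists>f. \<exists>js. (\<forall>j\<in>set js. Suc j < length L) \<and> (\<forall>i<length L. \<sigma> (perm_of js i) = i) \<and> f = steps_mor C L js"
    by (rule exI[of _ "steps_mor C L js"], rule exI[of _ js]) (use js sp in auto)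
  have P: "\<And>js. (\<forall>j\<in>set js. Suc j < length L) \<Longrightarrow> (\<forall>i<length L. \<sigma> (perm_of js i) = i) \<Longrightarrow> steps_mor C L js = idm C (tens_list C L)"
  proof -
    fix js assume a: "\<forall>j\<in>set js. Suc j < length L" "\<forall>i<length L. \<sigma> (perm_of js i) = i"
    have ip: "isperm ?n (perm_of js)" using isperm_perm_of a(1) by blast
    have "canon_n C ?n L (perm_of js) = idm C (tens_list C L)"
    proof (rule canon_mono[OF obL refl ip], intro allI impI)
      fix i i' assume ii: "i < i'" "i' < ?n" "L ! perm_of js i \<noteq> un C" "L ! perm_of js i' \<noteq> un C"
      have lt: "perm_of js i < ?n" "perm_of js i' < ?n" using ip isperm_lt ii by auto
      have si: "\<sigma> (perm_of js i) = i" "\<sigma> (perm_of js i') = i'" using a(2) ii by auto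
      have neq: "perm_of js i \<noteq> perm_of js i'" using si ii by auto
      show "perm_of js i < perm_of js i'"
      proof (rule ccontr)
        assume "\<not> perm_of js i < perm_of js i'"
        then have "perm_of js i' < perm_of js i" using neq by auto
        then have "\<sigma> (perm_of js i') < \<sigma> (perm_of js i)" using mono lt ii by blast
        then show False using si ii by auto
      qed
    qed
    then show "steps_mor C L js = idm C (tens_list C L)" using steps_canon[OF obL a(1)] by simp
  qed
  obtain js2 where "(\<forall>j\<in>set js2. Suc j < length L)" "(\<forall>i<length L. \<sigma> (perm_of js2 i) = i)"
     "coh C L \<sigma> = steps_mor C L js2"
    using someI_ex[OF ex] unfolding coh_def by blast
  then show ?thesis using P by simp
qed

end




lemma sl_eq: "finite A \<Longrightarrow> sorted_wrt (<) xs \<Longrightarrow> set xs = A \<Longrightarrow> sorted_list_of_set A = xs"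
  by (metis strict_sorted_equal strict_sorted_list_of_set set_sorted_list_of_set)

lemma sl_image: assumes "finite S" "\<forall>x\<in>S. \<forall>y\<in>S. x < y \<longrightarrow> u x < (u y :: nat)"
  shows "sorted_list_of_set (u ` S) = map u (sorted_list_of_set S)"
proof (rule sl_eq)
  show "finite (u ` S)" using assms by simp
  show "set (map u (sorted_list_of_set S)) = u ` S" using assms by simp
  have "sorted_wrt (<) (sorted_list_of_set S)" by simp
  moreover have "set (sorted_list_of_set S) = S" using assms by simp
  ultimately show "sorted_wrt (<) (map u (sorted_list_of_set S))"
    using assms(2) unfolding sorted_wrt_map by (metis (no_types, lifting) sorted_wrt_mono_rel)
qed

lemma sl_union: assumes "finite A" "finite B" "\<forall>x\<in>A. \<forall>y\<in>B. x < (y::nat)"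
  shows "sorted_list_of_set (A \<union> B) = sorted_list_of_set A @ sorted_list_of_set B"
proof (rule sl_eq)
  show "finite (A \<union> B)" using assms by simp
  show "set (sorted_list_of_set A @ sorted_list_of_set B) = A \<union> B" using assms by simp
  show "sorted_wrt (<) (sorted_list_of_set A @ sorted_list_of_set B)"
    using assms by (simp add: sorted_wrt_append)
qed

lemma card_less_sl: assumes "finite A" "p < card A"
  shows "card {k\<in>A. k < sorted_list_of_set A ! p} = (p::nat)"
proof -
  let ?xs = "sorted_list_of_set A"
  have s: "sorted_wrt (<) ?xs" "distinct ?xs" "set ?xs = A" "length ?xs = card A" using assms by auto
  have "{k\<in>A. k < ?xs ! p} = set (take p ?xs)"
  proof
    show "{k\<in>A. k < ?xs ! p} \<subseteq> set (take p ?xs)"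
    proof
      fix k assume k: "k \<in> {k\<in>A. k < ?xs ! p}"
      then have "k \<in> set ?xs" using s by auto
      then obtain q where q: "q < length ?xs" "k = ?xs ! q" by (metis in_set_conv_nth)
      have "q < p"
      proof (rule ccontr)
        assume "\<not> q < p"
        then have "p = q \<or> p < q" by auto
        then have "?xs ! p \<le> ?xs ! q" using sorted_wrt_nth_less[OF s(1), of p q] q by auto
        then show False using k q by auto
      qed
      then show "k \<in> set (take p ?xs)" using q by (auto simp: in_set_conv_nth)
    qed
    show "set (take p ?xs) \<subseteq> {k\<in>A. k < ?xs ! p}"
    proof
      fix k assume "k \<in> set (take p ?xs)"
      then obtain q where q: "q < p" "k = ?xs ! q" using assms s by (auto simp: in_set_conv_nth)
      have "?xs ! q \<in> set ?xs" using q s(4) assms by (intro nth_mem) auto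
      then show "k \<in> {k\<in>A. k < ?xs ! p}" using q s assms sorted_wrt_nth_less[OF s(1), of q p] by auto
    qed
  qed
  then show ?thesis using s assms by (simp add: distinct_card)
qed


context pc begin

lemma supp_push: "inj u \<Longrightarrow> supp C (push C u X) = u ` supp C X"
  unfolding supp_def push_def by (auto simp: inv_f_f inj_eq)

lemma push_app[simp]: "inj u \<Longrightarrow> push C u X (u j) = X j"
  unfolding push_def by (simp add: inv_f_f)

lemma push_ob: "(\<forall>i. X i \<in> ob C) \<Longrightarrow> push C u X i \<in> ob C"
  unfolding push_def by auto

lemma supp_osum: "supp C (osum C X Y) = supp C X \<union> supp C Y"
  unfolding supp_def osum_def by auto

lemma osum_ob: "(\<forall>i. X i \<in> ob C) \<Longrightarrow> (\<forall>i. Y i \<in> ob C) \<Longrightarrow> osum C X Y i \<in> ob C"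
  unfolding osum_def by auto

lemma bigtens_ob: "(\<forall>i. X i \<in> ob C) \<Longrightarrow> bigtens C X \<in> ob C"
  unfolding bigtens_def by (intro tens_ob) auto

lemma bigtens_push: assumes "inj u" "finite (supp C X)" "\<forall>x\<in>supp C X. \<forall>y\<in>supp C X. x < y \<longrightarrow> u x < u y"
  shows "bigtens C (push C u X) = bigtens C X"
  unfolding bigtens_def supp_push[OF assms(1)] sl_image[OF assms(2,3)] using assms(1) by (simp add: comp_def)

lemma bigtens_osum: assumes "finite (supp C X)" "finite (supp C Y)" "\<forall>i. X i \<in> ob C" "\<forall>i. Y i \<in> ob C"
   "\<forall>x\<in>supp C X. \<forall>y\<in>supp C Y. x < y"
  shows "bigtens C (osum C X Y) = tn C (bigtens C X) (bigtens C Y)"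
proof -
  have d: "supp C X \<inter> supp C Y = {}" using assms(5) by auto
  have m1: "map (osum C X Y) (sorted_list_of_set (supp C X)) = map X (sorted_list_of_set (supp C X))"
    using assms(1) by (auto simp: osum_def)
  have m2: "map (osum C X Y) (sorted_list_of_set (supp C Y)) = map Y (sorted_list_of_set (supp C Y))"
    using assms(2) d by (auto simp: osum_def)
  have m3: "tens_list C (map X (sorted_list_of_set (supp C X)) @ map Y (sorted_list_of_set (supp C Y)))
     = tn C (tens_list C (map X (sorted_list_of_set (supp C X)))) (tens_list C (map Y (sorted_list_of_set (supp C Y))))"
    by (rule tens_append) (use assms(3,4) in auto)
  show ?thesis unfolding bigtens_def supp_osum sl_union[OF assms(1,2,5)] map_append m1 m2 by (rule m3)
qed

lemma inv_mor_id: assumes "A \<in> ob C" shows "inv_mor C (idm C A) = idm C A"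
proof -
  have ex: "\<exists>g. g \<in> mor C \<and> dm C g = cd C (idm C A) \<and> cd C g = dm C (idm C A) \<and>
        cmp C g (idm C A) = idm C (dm C (idm C A)) \<and> cmp C (idm C A) g = idm C (cd C (idm C A))"
    using assms by (intro exI[of _ "idm C A"]) simp
  show ?thesis unfolding inv_mor_def using someI_ex[OF ex] assms by auto
qed

lemma tens_filter: "set L \<subseteq> ob C \<Longrightarrow> tens_list C (filter (\<lambda>x. x \<noteq> un C) L) = tens_list C L"
  by (induction L) auto

lemma rearr_id: assumes "finite (supp C X)" "finite (supp C Y)" "\<forall>i. X i \<in> ob C" "\<forall>i. Y i \<in> ob C"
   "\<forall>x\<in>supp C X. \<forall>y\<in>supp C Y. x < y"
  shows "rearr C X Y = idm C (bigtens C (osum C X Y))"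
proof -
  let ?A = "supp C X" and ?B = "supp C Y"
  define S where "S = sorted_list_of_set (?A \<union> ?B)"
  define \<sigma> where "\<sigma> = (\<lambda>p. if S ! p \<in> ?A then card {k\<in>?A. k < S ! p}
                    else card ?A + card {k\<in>?B. k < S ! p})"
  have S: "S = sorted_list_of_set ?A @ sorted_list_of_set ?B" unfolding S_def using sl_union assms by blast
  have d: "?A \<inter> ?B = {}" using assms(5) by auto
  have lS: "length S = card ?A + card ?B" unfolding S using assms by simp
  have sid: "\<forall>p<length S. \<sigma> p = p"
  proof (intro allI impI)
    fix p assume p: "p < length S"
    show "\<sigma> p = p"
    proof (cases "p < card ?A")
      case True
      then have e: "S ! p = sorted_list_of_set ?A ! p" unfolding S using assms by (simp add: nth_append)
      have "S ! p \<in> ?A" unfolding e using True assms(1)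
        by (metis length_sorted_list_of_set nth_mem set_sorted_list_of_set)
      then show ?thesis unfolding \<sigma>_def e using card_less_sl[OF assms(1) True] by simp
    next
      case False
      define q where "q = p - card ?A"
      have q: "q < card ?B" using False p lS q_def by simp
      have e: "S ! p = sorted_list_of_set ?B ! q" unfolding S q_def using assms False by (simp add: nth_append)
      have "S ! p \<in> ?B" unfolding e using q assms(2)
        by (metis length_sorted_list_of_set nth_mem set_sorted_list_of_set)
      then have "S ! p \<notin> ?A" using d by auto
      then show ?thesis unfolding \<sigma>_def e using card_less_sl[OF assms(2) q] False q_def by simp
    qed
  qed
  have obL: "set (map (osum C X Y) S) \<subseteq> ob C" using osum_ob assms by auto
  have "coh C (map (osum C X Y) S) \<sigma> = idm C (tens_list C (map (osum C X Y) S))"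
  proof (rule coh_id[OF obL])
    show "bij_betw \<sigma> {..<length (map (osum C X Y) S)} {..<length (map (osum C X Y) S)}"
      using bij_betw_cong[of "{..<length S}" \<sigma> id "{..<length S}"] sid by simp
    show "\<forall>p q. p < length (map (osum C X Y) S) \<longrightarrow> q < length (map (osum C X Y) S) \<longrightarrow> p < q \<longrightarrow>
        map (osum C X Y) S ! p \<noteq> un C \<longrightarrow> map (osum C X Y) S ! q \<noteq> un C \<longrightarrow> \<sigma> p < \<sigma> q"
      using sid by auto
  qed
  moreover have "rearr C X Y = coh C (map (osum C X Y) S) \<sigma>"
    unfolding rearr_def S_def \<sigma>_def Let_def by simp
  ultimately show ?thesis unfolding bigtens_def supp_osum S_def by simp
qed

end

context pc begin

lemma tens_upto: assumes "\<forall>i. X i \<in> ob C" "\<forall>i\<ge>K. X i = un C" "finite (supp C X)"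
  shows "tens_list C (map X [0..<K]) = bigtens C X"
proof -
  have "filter (\<lambda>i. X i \<noteq> un C) [0..<K] = sorted_list_of_set (supp C X)"
  proof (rule sl_eq[symmetric])
    show "finite (supp C X)" by fact
    show "sorted_wrt (<) (filter (\<lambda>i. X i \<noteq> un C) [0..<K])" by (simp add: sorted_wrt_filter)
    show "set (filter (\<lambda>i. X i \<noteq> un C) [0..<K]) = supp C X"
      using assms(2) unfolding supp_def by (auto simp: not_le[symmetric])
  qed
  note e = this
  have "tens_list C (map X [0..<K]) = tens_list C (filter (\<lambda>x. x \<noteq> un C) (map X [0..<K]))"
    using tens_filter[of "map X [0..<K]"] assms(1) by (auto simp: image_subset_iff)
  also have "filter (\<lambda>x. x \<noteq> un C) (map X [0..<K]) = map X (filter (\<lambda>i. X i \<noteq> un C) [0..<K])"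
    by (simp add: filter_map comp_def)
  finally show ?thesis unfolding bigtens_def e .
qed

lemma struct_iso_id: assumes P: "Phi_obj C X" and inj: "inj u"
  and mono: "\<forall>x\<in>supp C X. \<forall>y\<in>supp C X. x < y \<longrightarrow> u x < u y"
  shows "struct_iso C u X = idm C (bigtens C X)"
proof -
  let ?S = "supp C X"
  have fin: "finite ?S" and obX: "\<forall>i. X i \<in> ob C" using P unfolding Phi_obj_def by auto
  obtain K where "\<forall>x\<in>?S \<union> u ` ?S. x < K" using finite_nat_set_iff_bounded[of "?S \<union> u ` ?S"] fin by auto
  then have K: "?S \<union> u ` ?S \<subseteq> {..<K}" by auto
  have cu: "card (u ` ?S) = card ?S" using inj by (simp add: card_image inj_on_subset)
  have "card ({..<K} - ?S) = card ({..<K} - u ` ?S)"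
    using K cu fin by (simp add: card_Diff_subset)
  then obtain h where h: "bij_betw h ({..<K} - ?S) ({..<K} - u ` ?S)"
    using finite_same_card_bij by blast
  define \<sigma> where "\<sigma> = (\<lambda>i. if i \<in> ?S then u i else h i)"
  have b1: "bij_betw \<sigma> ?S (u ` ?S)"
    using bij_betw_cong[of ?S \<sigma> u "u ` ?S"] inj_on_imp_bij_betw[of u ?S] inj unfolding \<sigma>_def
    by (simp add: inj_on_subset)
  have b2: "bij_betw \<sigma> ({..<K} - ?S) ({..<K} - u ` ?S)"
    using bij_betw_cong[of "{..<K} - ?S" \<sigma> h] h unfolding \<sigma>_def by simp
  have "bij_betw \<sigma> (?S \<union> ({..<K} - ?S)) (u ` ?S \<union> ({..<K} - u ` ?S))"
    by (rule bij_betw_combine[OF b1 b2]) auto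
  moreover have "?S \<union> ({..<K} - ?S) = {..<K}" "u ` ?S \<union> ({..<K} - u ` ?S) = {..<K}" using K by auto
  ultimately have bs: "bij_betw \<sigma> {..<K} {..<K}" by simp
  have c2: "\<forall>i<K. X i \<noteq> un C \<longrightarrow> \<sigma> i = u i" unfolding \<sigma>_def supp_def by auto
  have c3: "\<forall>i\<ge>K. X i = un C \<and> push C u X i = un C"
  proof (intro allI impI conjI)
    fix i assume i: "K \<le> i"
    show "X i = un C" using K i unfolding supp_def by (auto simp: subset_iff)
    show "push C u X i = un C"
    proof (rule ccontr)
      assume "push C u X i \<noteq> un C"
      then have "i \<in> u ` ?S" using supp_push[OF inj, of X] unfolding supp_def by blast
      then show False using K i by auto
    qed
  qed
  have ex: "\<exists>f K \<sigma>. bij_betw \<sigma> {..<K} {..<K} \<and>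
        (\<forall>i<K. X i \<noteq> un C \<longrightarrow> \<sigma> i = u i) \<and>
        (\<forall>i\<ge>K. X i = un C \<and> push C u X i = un C) \<and>
        f = coh C (map X [0..<K]) \<sigma>"
    using bs c2 c3 by blast
  obtain K' \<sigma>' where w: "bij_betw \<sigma>' {..<K'} {..<K'}" "\<forall>i<K'. X i \<noteq> un C \<longrightarrow> \<sigma>' i = u i"
     "\<forall>i\<ge>K'. X i = un C \<and> push C u X i = un C" "struct_iso C u X = coh C (map X [0..<K']) \<sigma>'"
    using someI_ex[OF ex] unfolding struct_iso_def by blast
  have "coh C (map X [0..<K']) \<sigma>' = idm C (tens_list C (map X [0..<K']))"
  proof (rule coh_id)
    show "set (map X [0..<K']) \<subseteq> ob C" using obX by auto
    show "bij_betw \<sigma>' {..<length (map X [0..<K'])} {..<length (map X [0..<K'])}" using w by simp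
    show "\<forall>p q. p < length (map X [0..<K']) \<longrightarrow> q < length (map X [0..<K']) \<longrightarrow> p < q \<longrightarrow>
      map X [0..<K'] ! p \<noteq> un C \<longrightarrow> map X [0..<K'] ! q \<noteq> un C \<longrightarrow> \<sigma>' p < \<sigma>' q"
      using w(2) mono unfolding supp_def by auto
  qed
  moreover have "tens_list C (map X [0..<K']) = bigtens C X" using tens_upto obX w(3) fin by blast
  ultimately show ?thesis using w(4) by simp
qed

end

lemma osum_list_Nil[simp]: "osum_list C [] = (\<lambda>_. un C)" by (simp add: osum_list_def)
lemma osum_list_Cons[simp]: "osum_list C (x # xs) = osum C x (osum_list C xs)" by (simp add: osum_list_def)

lemma phi_inj: "inj_fam m \<phi> \<Longrightarrow> a < m \<Longrightarrow> inj (\<phi> a)"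
  unfolding inj_fam_def inj_on_def inj_def by auto

lemma phi_mono: "X_monotone C m Xs \<phi> \<Longrightarrow> a < m \<Longrightarrow> \<forall>x\<in>supp C (Xs a). \<forall>y\<in>supp C (Xs a). x < y \<longrightarrow> \<phi> a x < \<phi> a y"
  unfolding X_monotone_def supp_def by auto

lemma phi_cross: "X_monotone C m Xs \<phi> \<Longrightarrow> a < b \<Longrightarrow> b < m \<Longrightarrow> x \<in> supp C (Xs a) \<Longrightarrow> y \<in> supp C (Xs b) \<Longrightarrow> \<phi> a x < \<phi> b y"
  unfolding X_monotone_def supp_def by auto

context pc begin

lemma G: assumes P: "\<forall>a<m. Phi_obj C (Xs a)" and inj: "inj_fam m \<phi>" and mono: "X_monotone C m Xs \<phi>"
  shows "sorted_wrt (<) as \<Longrightarrow> (\<forall>a\<in>set as. a < m) \<Longrightarrow>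
    supp C (osum_list C (map (\<lambda>a. push C (\<phi> a) (Xs a)) as)) = (\<Union>a\<in>set as. \<phi> a ` supp C (Xs a)) \<and>
    finite (supp C (osum_list C (map (\<lambda>a. push C (\<phi> a) (Xs a)) as))) \<and>
    (\<forall>i. osum_list C (map (\<lambda>a. push C (\<phi> a) (Xs a)) as) i \<in> ob C) \<and>
    bigtens C (osum_list C (map (\<lambda>a. push C (\<phi> a) (Xs a)) as)) = tens_list C (map (\<lambda>a. bigtens C (Xs a)) as)"
proof (induction as)
  case Nil
  have "supp C (\<lambda>_. un C) = {}" by (simp add: supp_def)
  then show ?case by (simp add: bigtens_def)
next
  case (Cons a as)
  let ?Y = "push C (\<phi> a) (Xs a)" and ?R = "osum_list C (map (\<lambda>a. push C (\<phi> a) (Xs a)) as)"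
  have am: "a < m" using Cons.prems by simp
  have IH: "supp C ?R = (\<Union>a\<in>set as. \<phi> a ` supp C (Xs a))" "finite (supp C ?R)" "\<forall>i. ?R i \<in> ob C"
     "bigtens C ?R = tens_list C (map (\<lambda>a. bigtens C (Xs a)) as)"
    using Cons by auto
  have ia: "inj (\<phi> a)" using phi_inj[OF inj am] .
  have PXa: "Phi_obj C (Xs a)" using P am by simp
  then have fa: "finite (supp C (Xs a))" and oa: "\<forall>i. Xs a i \<in> ob C" unfolding Phi_obj_def by auto
  have sY: "supp C ?Y = \<phi> a ` supp C (Xs a)" using supp_push[OF ia] .
  have fY: "finite (supp C ?Y)" using sY fa by simp
  have oY: "\<forall>i. ?Y i \<in> ob C" using push_ob oa by blast
  have ord: "\<forall>x\<in>supp C ?Y. \<forall>y\<in>supp C ?R. x < y"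
  proof (intro ballI)
    fix x y assume x: "x \<in> supp C ?Y" and y: "y \<in> supp C ?R"
    obtain x0 where x0: "x0 \<in> supp C (Xs a)" "x = \<phi> a x0" using x sY by auto
    obtain b y0 where y0: "b \<in> set as" "y0 \<in> supp C (Xs b)" "y = \<phi> b y0" using y IH(1) by auto
    have "a < b" "b < m" using Cons.prems y0(1) by auto
    then show "x < y" using phi_cross[OF mono _ _ x0(1) y0(2)] x0 y0 by simp
  qed
  have "bigtens C (osum C ?Y ?R) = tn C (bigtens C ?Y) (bigtens C ?R)"
    by (rule bigtens_osum[OF fY IH(2) oY IH(3) ord])
  moreover have "bigtens C ?Y = bigtens C (Xs a)" by (rule bigtens_push[OF ia fa phi_mono[OF mono am]])
  ultimately show ?case using IH sY fY oY supp_osum osum_ob[OF oY IH(3)] by simp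
qed

lemma G5: assumes P: "\<forall>a<m. Phi_obj C (Xs a)" and inj: "inj_fam m \<phi>" and mono: "X_monotone C m Xs \<phi>"
   and inj': "inj_fam m \<phi>'" and mono': "X_monotone C m Xs \<phi>'"
  shows "sorted_wrt (<) as \<Longrightarrow> (\<forall>a\<in>set as. a < m) \<Longrightarrow>
    msum_list C (map (\<lambda>a. (push C (\<phi> a) (Xs a), push C (\<phi>' a) (Xs a), gen_iso C (\<phi>' a) (\<phi> a) (Xs a))) as)
     = idm C (bigtens C (osum_list C (map (\<lambda>a. push C (\<phi> a) (Xs a)) as)))"
proof (induction as)
  case Nil
  have "supp C (\<lambda>_. un C) = {}" by (simp add: supp_def)
  then show ?case by (simp add: bigtens_def)
next
  case (Cons a as)
  let ?Y = "push C (\<phi> a) (Xs a)" and ?R = "osum_list C (map (\<lambda>a. push C (\<phi> a) (Xs a)) as)"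
  let ?Y' = "push C (\<phi>' a) (Xs a)" and ?R' = "osum_list C (map (\<lambda>a. push C (\<phi>' a) (Xs a)) as)"
  have am: "a < m" using Cons.prems by simp
  have GR: "supp C ?R = (\<Union>a\<in>set as. \<phi> a ` supp C (Xs a))" "finite (supp C ?R)" "\<forall>i. ?R i \<in> ob C"
     "bigtens C ?R = tens_list C (map (\<lambda>a. bigtens C (Xs a)) as)"
    using G[OF P inj mono, of as] Cons.prems by auto
  have GR': "supp C ?R' = (\<Union>a\<in>set as. \<phi>' a ` supp C (Xs a))" "finite (supp C ?R')" "\<forall>i. ?R' i \<in> ob C"
     "bigtens C ?R' = tens_list C (map (\<lambda>a. bigtens C (Xs a)) as)"
    using G[OF P inj' mono', of as] Cons.prems by auto
  have GY: "bigtens C (osum C ?Y ?R) = tn C (bigtens C (Xs a)) (tens_list C (map (\<lambda>a. bigtens C (Xs a)) as))"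
    using G[OF P inj mono, of "a # as"] Cons.prems by auto
  have GY': "bigtens C (osum C ?Y' ?R') = tn C (bigtens C (Xs a)) (tens_list C (map (\<lambda>a. bigtens C (Xs a)) as))"
    using G[OF P inj' mono', of "a # as"] Cons.prems by auto
  have GYs: "supp C (osum C ?Y ?R) = (\<Union>a\<in>set (a#as). \<phi> a ` supp C (Xs a))" "finite (supp C (osum C ?Y ?R))"
    using G[OF P inj mono, of "a # as"] Cons.prems by auto
  have IH: "msum_list C (map (\<lambda>a. (push C (\<phi> a) (Xs a), push C (\<phi>' a) (Xs a), gen_iso C (\<phi>' a) (\<phi> a) (Xs a))) as)
     = idm C (bigtens C ?R)" using Cons by auto
  have ia: "inj (\<phi> a)" using phi_inj[OF inj am] .
  have ia': "inj (\<phi>' a)" using phi_inj[OF inj' am] .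
  have PXa: "Phi_obj C (Xs a)" using P am by simp
  then have fa: "finite (supp C (Xs a))" and oa: "\<forall>i. Xs a i \<in> ob C" unfolding Phi_obj_def by auto
  have T: "bigtens C (Xs a) \<in> ob C" using bigtens_ob oa by blast
  have R: "bigtens C ?R \<in> ob C" using bigtens_ob GR(3) by blast
  have sY: "supp C ?Y = \<phi> a ` supp C (Xs a)" using supp_push[OF ia] .
  have sY': "supp C ?Y' = \<phi>' a ` supp C (Xs a)" using supp_push[OF ia'] .
  have oY: "\<forall>i. ?Y i \<in> ob C" "\<forall>i. ?Y' i \<in> ob C" using push_ob oa by blast+
  have ord: "\<forall>x\<in>supp C ?Y. \<forall>y\<in>supp C ?R. x < y"
  proof (intro ballI)
    fix x y assume x: "x \<in> supp C ?Y" and y: "y \<in> supp C ?R"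
    obtain x0 where x0: "x0 \<in> supp C (Xs a)" "x = \<phi> a x0" using x sY by auto
    obtain b y0 where y0: "b \<in> set as" "y0 \<in> supp C (Xs b)" "y = \<phi> b y0" using y GR(1) by auto
    have "a < b" "b < m" using Cons.prems y0(1) by auto
    then show "x < y" using phi_cross[OF mono _ _ x0(1) y0(2)] x0 y0 by simp
  qed
  have ord': "\<forall>x\<in>supp C ?Y'. \<forall>y\<in>supp C ?R'. x < y"
  proof (intro ballI)
    fix x y assume x: "x \<in> supp C ?Y'" and y: "y \<in> supp C ?R'"
    obtain x0 where x0: "x0 \<in> supp C (Xs a)" "x = \<phi>' a x0" using x sY' by auto
    obtain b y0 where y0: "b \<in> set as" "y0 \<in> supp C (Xs b)" "y = \<phi>' b y0" using y GR'(1) by auto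
    have "a < b" "b < m" using Cons.prems y0(1) by auto
    then show "x < y" using phi_cross[OF mono' _ _ x0(1) y0(2)] x0 y0 by simp
  qed
  have r1: "rearr C ?Y ?R = idm C (bigtens C (osum C ?Y ?R))"
    by (rule rearr_id) (use sY fa GR oY ord in auto)
  have r2: "rearr C ?Y' ?R' = idm C (bigtens C (osum C ?Y' ?R'))"
    by (rule rearr_id) (use sY' fa GR' oY ord' in auto)
  have gi: "gen_iso C (\<phi>' a) (\<phi> a) (Xs a) = idm C (bigtens C (Xs a))"
    unfolding gen_iso_def struct_iso_id[OF PXa ia phi_mono[OF mono am]] struct_iso_id[OF PXa ia' phi_mono[OF mono' am]]
    using inv_mor_id T by simp
  have e1: "map fst (map (\<lambda>a. (push C (\<phi> a) (Xs a), push C (\<phi>' a) (Xs a), gen_iso C (\<phi>' a) (\<phi> a) (Xs a))) as)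
     = map (\<lambda>a. push C (\<phi> a) (Xs a)) as" by simp
  have e2: "map (fst \<circ> snd) (map (\<lambda>a. (push C (\<phi> a) (Xs a), push C (\<phi>' a) (Xs a), gen_iso C (\<phi>' a) (\<phi> a) (Xs a))) as)
     = map (\<lambda>a. push C (\<phi>' a) (Xs a)) as" by simp
  have "tnm C (idm C (bigtens C (Xs a))) (idm C (bigtens C ?R)) = idm C (tn C (bigtens C (Xs a)) (bigtens C ?R))"
    using T R by simp
  then show ?case
    unfolding list.map(2) msum_list.simps e1 e2 msum_def IH gi r1 r2 GY GY' osum_list_Cons
    using T R GR(4) inv_mor_id by simp
qed

end

lemma lt_block: "(a::nat) < a' \<Longrightarrow> j < B \<Longrightarrow> a * B + j < a' * B + j'"
proof -
  assume a: "a < a'" "j < B"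
  have "a * B + j < Suc a * B" using a by simp
  also have "\<dots> \<le> a' * B" using a by (intro mult_le_mono1) simp
  finally show ?thesis by simp
qed

lemma phi0_inj: assumes "a < m" "a' < m"
  and e: "(if j < B then a * B + j else m * B + j * m + a) = (if j' < B then a' * B + j' else m * B + j' * m + (a'::nat))"
  shows "a = a' \<and> j = j'"
proof (cases "j < B")
  case True
  note jt = True
  show ?thesis
  proof (cases "j' < B")
    case True
    then have "a * B + j = a' * B + j'" using e jt by simp
    then show ?thesis using lt_block[of a a' j B j'] lt_block[of a' a j' B j] jt True
      by (metis add_left_cancel linorder_neqE_nat order_less_irrefl)
  next
    case False
    have "a * B + j < m * B + 0" using lt_block[of a m j B 0] assms jt by simp
    then show ?thesis using e jt False by simp
  qed
next
  case False
  note jf = False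
  show ?thesis
  proof (cases "j' < B")
    case True
    have "a' * B + j' < m * B + 0" using lt_block[of a' m j' B 0] assms True by simp
    then show ?thesis using e jf True by simp
  next
    case False
    then have "j * m + a = j' * m + a'" using e jf by simp
    then show ?thesis using lt_block[of j j' a m a'] lt_block[of j' j a' m a] assms
      by (metis add_left_cancel linorder_neqE_nat order_less_irrefl)
  qed
qed

theorem proposition2p12:
  fixes C :: "('o, 'm) pcat" and m :: nat and Xs :: "nat \<Rightarrow> nat \<Rightarrow> 'o"
  assumes "permutative_cat C"
    and "\<forall>a<m. Phi_obj C (Xs a)"
  shows "(\<exists>\<phi>. inj_fam m \<phi> \<and> X_monotone C m Xs \<phi>) \<and>
         (\<forall>\<phi> \<phi>'. inj_fam m \<phi> \<and> X_monotone C m Xs \<phi> \<and> inj_fam m \<phi>' \<and> X_monotone C m Xs \<phi>' \<longrightarrow>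
            bigtens C (push_fam C m \<phi> Xs) = bigtens C (push_fam C m \<phi>' Xs) \<and>
            gen_iso_fam C m \<phi>' \<phi> Xs = idm C (bigtens C (push_fam C m \<phi> Xs)))"
proof
  interpret pc C by (rule pc.intro) (rule assms(1))
  show "\<exists>\<phi>. inj_fam m \<phi> \<and> X_monotone C m Xs \<phi>"
  proof -
    have "finite (\<Union>a<m. supp C (Xs a))" using assms(2) unfolding Phi_obj_def by auto
    then obtain B where B: "\<forall>x\<in>(\<Union>a<m. supp C (Xs a)). x < B" using finite_nat_set_iff_bounded by auto
    define \<phi> where "\<phi> = (\<lambda>a j. if j < B then a * B + j else m * B + j * m + (a::nat))"
    have "inj_fam m \<phi>" unfolding inj_fam_def
    proof (rule inj_onI)
      fix x y assume x: "x \<in> {..<m} \<times> (UNIV :: nat set)" and y: "y \<in> {..<m} \<times> (UNIV :: nat set)"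
        and e: "(case x of (a, j) \<Rightarrow> \<phi> a j) = (case y of (a, j) \<Rightarrow> \<phi> a j)"
      obtain a j a' j' where xy: "x = (a, j)" "y = (a', j')" by fastforce
      show "x = y" using phi0_inj[of a m a' j B j'] x y e unfolding xy \<phi>_def by auto
    qed
    moreover have "X_monotone C m Xs \<phi>" unfolding X_monotone_def
    proof (intro allI impI)
      fix i i' j j' assume i: "i < m" "i' < m"
        and h: "(i < i' \<or> i = i' \<and> j < j') \<and> Xs i j \<noteq> un C \<and> Xs i' j' \<noteq> un C"
      have jB: "j < B" "j' < B" using B i h unfolding supp_def by auto
      show "\<phi> i j < \<phi> i' j'" unfolding \<phi>_def using jB h lt_block[of i i' j B j'] by auto
    qed
    ultimately show ?thesis by blast
  qed
  show "\<forall>\<phi> \<phi>'. inj_fam m \<phi> \<and> X_monotone C m Xs \<phi> \<and> inj_fam m \<phi>' \<and> X_monotone C m Xs \<phi>' \<longrightarrow>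
            bigtens C (push_fam C m \<phi> Xs) = bigtens C (push_fam C m \<phi>' Xs) \<and>
            gen_iso_fam C m \<phi>' \<phi> Xs = idm C (bigtens C (push_fam C m \<phi> Xs))"
  proof (intro allI impI conjI)
    fix \<phi> \<phi>' assume h: "inj_fam m \<phi> \<and> X_monotone C m Xs \<phi> \<and> inj_fam m \<phi>' \<and> X_monotone C m Xs \<phi>'"
    have s: "sorted_wrt (<) [0..<m]" "\<forall>a\<in>set [0..<m]. a < m" by auto
    show "bigtens C (push_fam C m \<phi> Xs) = bigtens C (push_fam C m \<phi>' Xs)"
      using G[OF assms(2), of \<phi> "[0..<m]"] G[OF assms(2), of \<phi>' "[0..<m]"] h s unfolding push_fam_def by auto
    show "gen_iso_fam C m \<phi>' \<phi> Xs = idm C (bigtens C (push_fam C m \<phi> Xs))"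
      using G5[OF assms(2), of \<phi> \<phi>' "[0..<m]"] h s unfolding push_fam_def gen_iso_fam_def by auto
  qed
qed


end
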